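(* Let $X\colon\mathcal H\leftarrow\mathcal G$ be a groupoid correspondence and $\xi\in\mathfrak S(X)$. Then there are finitely many $a_1,\dots,a_n\in\mathfrak S(\mathcal G)$ with $\langle\xi|\xi\rangle=\sum_{i=1}^n a_i*a_i^*$. Moreover, if $\xi\neq0$, then $\langle\xi|\xi\rangle\neq0$.
   Context: Groupoids are étale ($r,s$ local homeomorphisms, continuous multiplication and inversion) with Hausdorff locally compact object space; arrow spaces may be non-Hausdorff. A groupoid correspondence $X\colon\mathcal H\leftarrow\mathcal G$: space with commuting continuous left $\mathcal H$-action and right $\mathcal G$-action (anchor $s\colon X\to\mathcal G^0$), $s$ a local homeomorphism, right action free and proper. For a locally compact, locally Hausdorff space $Y$, $\mathfrak S(Y)$ is the linear span of functions on $Y$ obtained by extending by zero functions in $C_c(V)$ for open Hausdorff $V\subseteq Y$. $\mathfrak S(\mathcal G)$ is a $*$-algebra with $\xi*\eta(g)=\sum_{h\in\mathcal G^{r(g)}}\xi(h)\eta(h^{-1}g)$, $\xi^*(g)=\overline{\xi(g^{-1})}$. The $\mathfrak S(\mathcal G)$-valued inner product on $\mathfrak S(X)$ is $\langle\xi|\eta\rangle(g)=\sum_{x\in X:\,s(x)=r(g)}\overline{\xi(x)}\eta(xg)$. *)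

theory Defs
  imports "HOL-Analysis.Analysis"
begin

definition local_homeomorphism :: "'a topology \<Rightarrow> 'b topology \<Rightarrow> ('a \<Rightarrow> 'b) \<Rightarrow> bool" where
  "local_homeomorphism X Y f \<longleftrightarrow>
     continuous_map X Y f \<and>
     (\<forall>x\<in>topspace X. \<exists>U. openin X U \<and> x \<in> U \<and> openin Y (f ` U) \<and>
        homeomorphic_map (subtopology X U) (subtopology Y (f ` U)) f)"

text \<open>Arrow space: the topological space G (arrows = topspace G, possibly non-Hausdorff);
  object space: the set of units G0 (a subset of the arrows) with the subspace topology,
  required Hausdorff and locally compact. r, s range, source; m multiplication
  (m g h defined for s g = r h); i inversion.\<close>
definition etale_groupoid ::
  "'g topology \<Rightarrow> 'g set \<Rightarrow> ('g \<Rightarrow> 'g) \<Rightarrow> ('g \<Rightarrow> 'g) \<Rightarrow> ('g \<Rightarrow> 'g \<Rightarrow> 'g) \<Rightarrow> ('g \<Rightarrow> 'g) \<Rightarrow> bool" where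
  "etale_groupoid G G0 r s m i \<longleftrightarrow>
     G0 \<subseteq> topspace G \<and>
     (\<forall>g\<in>topspace G. r g \<in> G0 \<and> s g \<in> G0 \<and> i g \<in> topspace G) \<and>
     (\<forall>u\<in>G0. r u = u \<and> s u = u) \<and>
     (\<forall>g\<in>topspace G. \<forall>h\<in>topspace G. s g = r h \<longrightarrow>
         m g h \<in> topspace G \<and> r (m g h) = r g \<and> s (m g h) = s h) \<and>
     (\<forall>g\<in>topspace G. \<forall>h\<in>topspace G. \<forall>k\<in>topspace G. s g = r h \<longrightarrow> s h = r k \<longrightarrow>
         m (m g h) k = m g (m h k)) \<and>
     (\<forall>g\<in>topspace G. m (r g) g = g \<and> m g (s g) = g) \<and>
     (\<forall>g\<in>topspace G. r (i g) = s g \<and> s (i g) = r g \<and> m g (i g) = r g \<and> m (i g) g = s g) \<and>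
     Hausdorff_space (subtopology G G0) \<and> locally_compact_space (subtopology G G0) \<and>
     local_homeomorphism G (subtopology G G0) r \<and>
     local_homeomorphism G (subtopology G G0) s \<and>
     continuous_map (subtopology (prod_topology G G) {(g, h). g \<in> topspace G \<and> h \<in> topspace G \<and> s g = r h})
        G (\<lambda>(g, h). m g h) \<and>
     continuous_map G G i"

definition groupoid_correspondence ::
  "'h topology \<Rightarrow> 'h set \<Rightarrow> ('h \<Rightarrow> 'h) \<Rightarrow> ('h \<Rightarrow> 'h) \<Rightarrow> ('h \<Rightarrow> 'h \<Rightarrow> 'h) \<Rightarrow> ('h \<Rightarrow> 'h) \<Rightarrow>
   'x topology \<Rightarrow> ('x \<Rightarrow> 'h) \<Rightarrow> ('h \<Rightarrow> 'x \<Rightarrow> 'x) \<Rightarrow> ('x \<Rightarrow> 'g) \<Rightarrow> ('x \<Rightarrow> 'g \<Rightarrow> 'x) \<Rightarrow>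
   'g topology \<Rightarrow> 'g set \<Rightarrow> ('g \<Rightarrow> 'g) \<Rightarrow> ('g \<Rightarrow> 'g) \<Rightarrow> ('g \<Rightarrow> 'g \<Rightarrow> 'g) \<Rightarrow> ('g \<Rightarrow> 'g) \<Rightarrow> bool" where
  "groupoid_correspondence H H0 rH sH mH iH X rX actL sX actR G G0 rG sG mG iG \<longleftrightarrow>
     etale_groupoid H H0 rH sH mH iH \<and> etale_groupoid G G0 rG sG mG iG \<and>
     \<comment> \<open>left action of H\<close>
     continuous_map X (subtopology H H0) rX \<and>
     (\<forall>h\<in>topspace H. \<forall>x\<in>topspace X. sH h = rX x \<longrightarrow>
        actL h x \<in> topspace X \<and> rX (actL h x) = rH h \<and> sX (actL h x) = sX x) \<and>
     (\<forall>h1\<in>topspace H. \<forall>h2\<in>topspace H. \<forall>x\<in>topspace X. sH h1 = rH h2 \<longrightarrow> sH h2 = rX x \<longrightarrow>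
        actL (mH h1 h2) x = actL h1 (actL h2 x)) \<and>
     (\<forall>x\<in>topspace X. actL (rX x) x = x) \<and>
     continuous_map (subtopology (prod_topology H X) {(h, x). h \<in> topspace H \<and> x \<in> topspace X \<and> sH h = rX x})
        X (\<lambda>(h, x). actL h x) \<and>
     \<comment> \<open>right action of G\<close>
     local_homeomorphism X (subtopology G G0) sX \<and>
     (\<forall>x\<in>topspace X. \<forall>g\<in>topspace G. sX x = rG g \<longrightarrow>
        actR x g \<in> topspace X \<and> sX (actR x g) = sG g \<and> rX (actR x g) = rX x) \<and>
     (\<forall>x\<in>topspace X. \<forall>g1\<in>topspace G. \<forall>g2\<in>topspace G. sX x = rG g1 \<longrightarrow> sG g1 = rG g2 \<longrightarrow>
        actR x (mG g1 g2) = actR (actR x g1) g2) \<and>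
     (\<forall>x\<in>topspace X. actR x (sX x) = x) \<and>
     continuous_map (subtopology (prod_topology X G) {(x, g). x \<in> topspace X \<and> g \<in> topspace G \<and> sX x = rG g})
        X (\<lambda>(x, g). actR x g) \<and>
     \<comment> \<open>the actions commute\<close>
     (\<forall>h\<in>topspace H. \<forall>x\<in>topspace X. \<forall>g\<in>topspace G. sH h = rX x \<longrightarrow> sX x = rG g \<longrightarrow>
        actR (actL h x) g = actL h (actR x g)) \<and>
     \<comment> \<open>the right action is free and proper\<close>
     (\<forall>x\<in>topspace X. \<forall>g\<in>topspace G. sX x = rG g \<longrightarrow> actR x g = x \<longrightarrow> g = sX x) \<and>
     proper_map (subtopology (prod_topology X G) {(x, g). x \<in> topspace X \<and> g \<in> topspace G \<and> sX x = rG g})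
        (prod_topology X X) (\<lambda>(x, g). (x, actR x g))"

definition Cc_extension :: "'y topology \<Rightarrow> ('y \<Rightarrow> complex) \<Rightarrow> bool" where
  "Cc_extension Y f \<longleftrightarrow>
     (\<exists>V. openin Y V \<and> Hausdorff_space (subtopology Y V) \<and>
          continuous_map (subtopology Y V) euclidean f \<and>
          (\<exists>K. compactin (subtopology Y V) K \<and> (\<forall>y\<in>V - K. f y = 0)) \<and>
          (\<forall>y. y \<notin> V \<longrightarrow> f y = 0))"

definition frakS :: "'y topology \<Rightarrow> ('y \<Rightarrow> complex) set" where
  "frakS Y = {f. \<exists>(n::nat) c b. (\<forall>k<n. Cc_extension Y (b k)) \<and>
                   f = (\<lambda>y. \<Sum>k<n. c k * b k y)}"

definition conv :: "'g topology \<Rightarrow> ('g \<Rightarrow> 'g) \<Rightarrow> ('g \<Rightarrow> 'g \<Rightarrow> 'g) \<Rightarrow> ('g \<Rightarrow> 'g) \<Rightarrow>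
    ('g \<Rightarrow> complex) \<Rightarrow> ('g \<Rightarrow> complex) \<Rightarrow> 'g \<Rightarrow> complex" where
  "conv G r m i \<xi> \<eta> g =
     (if g \<in> topspace G then
        (\<Sum>\<^sub>\<infinity>h\<in>{h \<in> topspace G. r h = r g}. \<xi> h * \<eta> (m (i h) g))
      else 0)"

definition invol :: "'g topology \<Rightarrow> ('g \<Rightarrow> 'g) \<Rightarrow> ('g \<Rightarrow> complex) \<Rightarrow> 'g \<Rightarrow> complex" where
  "invol G i \<xi> g = (if g \<in> topspace G then cnj (\<xi> (i g)) else 0)"

definition corr_inner :: "'x topology \<Rightarrow> ('x \<Rightarrow> 'g) \<Rightarrow> ('x \<Rightarrow> 'g \<Rightarrow> 'x) \<Rightarrow> 'g topology \<Rightarrow> ('g \<Rightarrow> 'g) \<Rightarrow>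
    ('x \<Rightarrow> complex) \<Rightarrow> ('x \<Rightarrow> complex) \<Rightarrow> 'g \<Rightarrow> complex" where
  "corr_inner X sX actR G r \<xi> \<eta> g =
     (if g \<in> topspace G then
        (\<Sum>\<^sub>\<infinity>x\<in>{x \<in> topspace X. sX x = r g}. cnj (\<xi> x) * \<eta> (actR x g))
      else 0)"

end

theory Submission
  imports Defs
begin


lemma infsum_fin:
  fixes f :: "'a \<Rightarrow> 'b::{comm_monoid_add,t2_space}"
  assumes "finite B" "B \<subseteq> A" "\<And>x. x \<in> A - B \<Longrightarrow> f x = 0"
  shows "infsum f A = sum f B"
proof -
  have "infsum f A = infsum f B"
    by (rule infsum_cong_neutral) (use assms in auto)
  then show ?thesis using assms(1) by simp
qed

locale gcorr =
  fixes H :: "'h topology" and H0 rH sH mH iH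
    and X :: "'x topology" and rX actL sX actR
    and G :: "'g topology" and G0 rG sG mG iG
  assumes corr: "groupoid_correspondence H H0 rH sH mH iH X rX actL sX actR G G0 rG sG mG iG"
begin

lemma etG: "etale_groupoid G G0 rG sG mG iG"
  using corr unfolding groupoid_correspondence_def by blast

lemma G0sub: "G0 \<subseteq> topspace G" using etG unfolding etale_groupoid_def by blast
lemma rG_G0: "g \<in> topspace G \<Longrightarrow> rG g \<in> G0" using etG unfolding etale_groupoid_def by blast
lemma sG_G0: "g \<in> topspace G \<Longrightarrow> sG g \<in> G0" using etG unfolding etale_groupoid_def by blast
lemma iG_G: "g \<in> topspace G \<Longrightarrow> iG g \<in> topspace G" using etG unfolding etale_groupoid_def by blast
lemma rG_unit: "u \<in> G0 \<Longrightarrow> rG u = u" using etG unfolding etale_groupoid_def by blast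
lemma sG_unit: "u \<in> G0 \<Longrightarrow> sG u = u" using etG unfolding etale_groupoid_def by blast
lemma mG_G: "g \<in> topspace G \<Longrightarrow> h \<in> topspace G \<Longrightarrow> sG g = rG h \<Longrightarrow> mG g h \<in> topspace G"
  using etG unfolding etale_groupoid_def by blast
lemma rG_m: "g \<in> topspace G \<Longrightarrow> h \<in> topspace G \<Longrightarrow> sG g = rG h \<Longrightarrow> rG (mG g h) = rG g"
  using etG unfolding etale_groupoid_def by blast
lemma sG_m: "g \<in> topspace G \<Longrightarrow> h \<in> topspace G \<Longrightarrow> sG g = rG h \<Longrightarrow> sG (mG g h) = sG h"
  using etG unfolding etale_groupoid_def by blast
lemma mG_assoc: "g \<in> topspace G \<Longrightarrow> h \<in> topspace G \<Longrightarrow> k \<in> topspace G \<Longrightarrow> sG g = rG h \<Longrightarrow> sG h = rG k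
   \<Longrightarrow> mG (mG g h) k = mG g (mG h k)"
  using etG unfolding etale_groupoid_def by blast
lemma mG_runit: "g \<in> topspace G \<Longrightarrow> mG (rG g) g = g" using etG unfolding etale_groupoid_def by blast
lemma mG_sunit: "g \<in> topspace G \<Longrightarrow> mG g (sG g) = g" using etG unfolding etale_groupoid_def by blast
lemma rG_i: "g \<in> topspace G \<Longrightarrow> rG (iG g) = sG g" using etG unfolding etale_groupoid_def by blast
lemma sG_i: "g \<in> topspace G \<Longrightarrow> sG (iG g) = rG g" using etG unfolding etale_groupoid_def by blast
lemma m_g_ig: "g \<in> topspace G \<Longrightarrow> mG g (iG g) = rG g" using etG unfolding etale_groupoid_def by blast
lemma m_ig_g: "g \<in> topspace G \<Longrightarrow> mG (iG g) g = sG g" using etG unfolding etale_groupoid_def by blast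
lemma G0_Hausdorff: "Hausdorff_space (subtopology G G0)" using etG unfolding etale_groupoid_def by blast
lemma G0_lc: "locally_compact_space (subtopology G G0)" using etG unfolding etale_groupoid_def by blast
lemma lh_r: "local_homeomorphism G (subtopology G G0) rG" using etG unfolding etale_groupoid_def by blast
lemma lh_s: "local_homeomorphism G (subtopology G G0) sG" using etG unfolding etale_groupoid_def by blast
lemma cont_i: "continuous_map G G iG" using etG unfolding etale_groupoid_def by blast

lemma cont_r: "continuous_map G (subtopology G G0) rG" using lh_r unfolding local_homeomorphism_def by blast
lemma cont_s: "continuous_map G (subtopology G G0) sG" using lh_s unfolding local_homeomorphism_def by blast

lemma ii: assumes "g \<in> topspace G" shows "iG (iG g) = g"
proof -
  have ig: "iG g \<in> topspace G" using iG_G assms .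
  have iig: "iG (iG g) \<in> topspace G" using iG_G ig .
  have "iG (iG g) = mG (iG (iG g)) (sG (iG (iG g)))" using mG_sunit iig by simp
  also have "sG (iG (iG g)) = rG (iG g)" using sG_i ig by simp
  also have "rG (iG g) = sG g" using rG_i assms by simp
  also have "sG g = mG (iG g) g" using m_ig_g assms by simp
  also have "mG (iG (iG g)) (mG (iG g) g) = mG (mG (iG (iG g)) (iG g)) g"
    using mG_assoc[OF iig ig assms] sG_i[OF ig] rG_i[OF ig] rG_i[OF assms] sG_i[OF assms] by simp
  also have "mG (iG (iG g)) (iG g) = sG (iG g)" using m_ig_g ig by simp
  also have "sG (iG g) = rG g" using sG_i assms by simp
  finally show ?thesis using mG_runit assms by simp
qed

lemma etX: "local_homeomorphism X (subtopology G G0) sX"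
  using corr unfolding groupoid_correspondence_def by blast
lemma cont_sX: "continuous_map X (subtopology G G0) sX" using etX unfolding local_homeomorphism_def by blast
lemma sX_G0: "x \<in> topspace X \<Longrightarrow> sX x \<in> G0"
  using cont_sX G0sub unfolding continuous_map_def by auto
lemma act_X: "x \<in> topspace X \<Longrightarrow> g \<in> topspace G \<Longrightarrow> sX x = rG g \<Longrightarrow> actR x g \<in> topspace X"
  using corr unfolding groupoid_correspondence_def by blast
lemma sX_act: "x \<in> topspace X \<Longrightarrow> g \<in> topspace G \<Longrightarrow> sX x = rG g \<Longrightarrow> sX (actR x g) = sG g"
  using corr unfolding groupoid_correspondence_def by blast
lemma act_assoc: "x \<in> topspace X \<Longrightarrow> g1 \<in> topspace G \<Longrightarrow> g2 \<in> topspace G \<Longrightarrow> sX x = rG g1 \<Longrightarrow> sG g1 = rG g2 \<Longrightarrow>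
        actR x (mG g1 g2) = actR (actR x g1) g2"
  using corr unfolding groupoid_correspondence_def by blast
lemma act_unit: "x \<in> topspace X \<Longrightarrow> actR x (sX x) = x"
  using corr unfolding groupoid_correspondence_def by blast
lemma free: "x \<in> topspace X \<Longrightarrow> g \<in> topspace G \<Longrightarrow> sX x = rG g \<Longrightarrow> actR x g = x \<Longrightarrow> g = sX x"
  using corr unfolding groupoid_correspondence_def by blast

definition "D = {(x, g). x \<in> topspace X \<and> g \<in> topspace G \<and> sX x = rG g}"

lemma cont_act: "continuous_map (subtopology (prod_topology X G) D) X (\<lambda>(x, g). actR x g)"
  using corr unfolding groupoid_correspondence_def D_def by blast
lemma proper: "proper_map (subtopology (prod_topology X G) D) (prod_topology X X) (\<lambda>(x, g). (x, actR x g))"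
  using corr unfolding groupoid_correspondence_def D_def by blast

lemma act_inv: assumes "x \<in> topspace X" "g \<in> topspace G" "sX x = rG g"
  shows "actR (actR x g) (iG g) = x"
proof -
  have "actR (actR x g) (iG g) = actR x (mG g (iG g))"
    using act_assoc[OF assms(1,2) iG_G[OF assms(2)] assms(3)] rG_i assms by simp
  also have "\<dots> = x" using m_g_ig assms act_unit by metis
  finally show ?thesis .
qed

lemma act_cancel: assumes "x \<in> topspace X" "a \<in> topspace G" "b \<in> topspace G" "sX x = rG a" "sX x = rG b"
  and eq: "actR x a = actR x b" shows "a = b"
proof -
  have sab: "sG a = sG b" using sX_act assms eq by metis
  have ia: "iG a \<in> topspace G" using iG_G assms by simp
  have "x = actR (actR x b) (iG a)" using act_inv assms eq by metis
  also have "\<dots> = actR x (mG b (iG a))"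
    using act_assoc[OF assms(1) assms(3) ia assms(5)] rG_i assms sab by simp
  finally have "actR x (mG b (iG a)) = x" by simp
  moreover have "mG b (iG a) \<in> topspace G" using mG_G assms ia rG_i sab by simp
  moreover have "rG (mG b (iG a)) = sX x" using rG_m assms ia rG_i sab by simp
  ultimately have e: "mG b (iG a) = sX x" using free assms(1) by metis
  have "b = mG b (sG b)" using mG_sunit assms by simp
  also have "sG b = mG (iG a) a" using m_ig_g assms sab by simp
  also have "mG b (mG (iG a) a) = mG (mG b (iG a)) a"
    using mG_assoc[OF assms(3) ia assms(2)] rG_i sG_i assms sab by simp
  also have "\<dots> = a" using e assms mG_runit by simp
  finally show ?thesis by simp
qed

end



lemma fin_fiber:
  assumes lh: "local_homeomorphism Y Z p" and T: "compactin Y T" and fib: "\<And>y. y \<in> T \<Longrightarrow> p y = z"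
  shows "finite T"
proof -
  have ex: "\<forall>y\<in>topspace Y. \<exists>U. openin Y U \<and> y \<in> U \<and> inj_on p U"
  proof
    fix y assume "y \<in> topspace Y"
    then obtain U where U: "openin Y U" "y \<in> U" "homeomorphic_map (subtopology Y U) (subtopology Z (p ` U)) p"
      using lh unfolding local_homeomorphism_def by blast
    have "inj_on p (topspace (subtopology Y U))"
      using U(3) homeomorphic_imp_injective_map by blast
    moreover have "topspace (subtopology Y U) = U" using openin_subset[OF U(1)] by auto
    ultimately show "\<exists>U. openin Y U \<and> y \<in> U \<and> inj_on p U" using U by auto
  qed
  obtain UU where UU0: "\<forall>y\<in>topspace Y. openin Y (UU y) \<and> y \<in> UU y \<and> inj_on p (UU y)"
    using bchoice[OF ex] by blast
  then have UU: "\<And>y. y \<in> topspace Y \<Longrightarrow> openin Y (UU y) \<and> y \<in> UU y \<and> inj_on p (UU y)" by blast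
  have Tsub: "T \<subseteq> topspace Y" using T compactin_subset_topspace by blast
  have cov: "\<forall>U\<in>UU ` T. openin Y U" "T \<subseteq> \<Union> (UU ` T)" using UU Tsub by auto
  obtain F where F: "finite F" "F \<subseteq> UU ` T" "T \<subseteq> \<Union> F"
  proof -
    have "\<forall>\<U>. (\<forall>U\<in>\<U>. openin Y U) \<and> T \<subseteq> \<Union>\<U> \<longrightarrow> (\<exists>\<F>. finite \<F> \<and> \<F> \<subseteq> \<U> \<and> T \<subseteq> \<Union>\<F>)"
      using T unfolding compactin_def by simp
    then have "\<exists>\<F>. finite \<F> \<and> \<F> \<subseteq> UU ` T \<and> T \<subseteq> \<Union>\<F>" using cov by simp
    then show ?thesis using that by auto
  qed
  have "finite (\<Union>A\<in>F. A \<inter> T)"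
  proof (rule finite_UN_I[OF F(1)])
    fix A assume "A \<in> F"
    then obtain y where y: "y \<in> T" "A = UU y" using F by auto
    have inj: "inj_on p A" using UU y Tsub by auto
    show "finite (A \<inter> T)"
    proof (cases "A \<inter> T = {}")
      case False
      then obtain a where a: "a \<in> A \<inter> T" by auto
      have "A \<inter> T \<subseteq> {a}"
      proof
        fix b assume "b \<in> A \<inter> T"
        then show "b \<in> {a}" using a inj fib unfolding inj_on_def by auto
      qed
      then show ?thesis using finite_subset by auto
    qed simp
  qed
  moreover have "T \<subseteq> (\<Union>A\<in>F. A \<inter> T)" using F(3) by auto
  ultimately show ?thesis by (rule finite_subset[rotated])
qed

lemma Cc_support:
  assumes "Cc_extension Y f"
  obtains V K where "openin Y V" "Hausdorff_space (subtopology Y V)"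
    "continuous_map (subtopology Y V) euclidean f" "compactin Y K" "K \<subseteq> V"
    "\<And>y. y \<notin> K \<Longrightarrow> f y = 0"
proof -
  obtain V K where "openin Y V" "Hausdorff_space (subtopology Y V)"
    "continuous_map (subtopology Y V) euclidean f" "compactin (subtopology Y V) K"
    "\<forall>y\<in>V - K. f y = 0" "\<forall>y. y \<notin> V \<longrightarrow> f y = 0"
    using assms unfolding Cc_extension_def by blast
  then show ?thesis using that[of V K] compactin_subtopology by blast
qed

lemma frakS_support:
  assumes "f \<in> frakS Y"
  obtains C where "compactin Y C" "\<And>y. y \<notin> C \<Longrightarrow> f y = 0"
proof -
  obtain n and c :: "nat \<Rightarrow> complex" and b where nb: "\<forall>k<n. Cc_extension Y (b k)" "f = (\<lambda>y. \<Sum>k<n. c k * b k y)"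
    using assms unfolding frakS_def by blast
  have ex: "\<forall>k\<in>{..<n}. \<exists>K. compactin Y K \<and> (\<forall>y. y \<notin> K \<longrightarrow> b k y = 0)"
  proof
    fix k assume "k \<in> {..<n}"
    then obtain V K where "compactin Y K" "\<And>y. y \<notin> K \<Longrightarrow> b k y = 0"
      using nb(1) Cc_support by (metis lessThan_iff)
    then show "\<exists>K. compactin Y K \<and> (\<forall>y. y \<notin> K \<longrightarrow> b k y = 0)" by blast
  qed
  obtain KK where KK: "\<forall>k\<in>{..<n}. compactin Y (KK k) \<and> (\<forall>y. y \<notin> KK k \<longrightarrow> b k y = 0)"
    using bchoice[OF ex] by blast
  have "compactin Y (\<Union>k\<in>{..<n}. KK k)"
    by (rule compactin_Union) (use KK in auto)
  moreover have "f y = 0" if "y \<notin> (\<Union>k\<in>{..<n}. KK k)" for y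
    unfolding nb(2) by (rule sum.neutral) (use that KK in auto)
  ultimately show ?thesis using that by blast
qed

lemma fiber_closed:
  assumes "Hausdorff_space Z" "continuous_map Y Z p"
  shows "closedin Y {y \<in> topspace Y. p y = z}"
proof (cases "z \<in> topspace Z")
  case True
  have "closedin Z {z}" using assms(1) True
    by (simp add: closedin_Hausdorff_singleton)
  then have "closedin Y {y \<in> topspace Y. p y \<in> {z}}"
    using closedin_continuous_map_preimage assms(2) by blast
  then show ?thesis by simp
next
  case False
  then have "{y \<in> topspace Y. p y = z} = {}" using assms(2) unfolding continuous_map_def by auto
  then show ?thesis by (metis closedin_empty)
qed

lemma frakS_fin:
  assumes "Hausdorff_space Z" "local_homeomorphism Y Z p" "f \<in> frakS Y"
  shows "finite {y \<in> topspace Y. p y = z \<and> f y \<noteq> 0}"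
proof -
  obtain C where C: "compactin Y C" "\<And>y. y \<notin> C \<Longrightarrow> f y = 0" using frakS_support assms(3) by blast
  have cont: "continuous_map Y Z p" using assms(2) unfolding local_homeomorphism_def by blast
  have "compactin Y ({y \<in> topspace Y. p y = z} \<inter> C)"
    by (rule closed_Int_compactin[OF fiber_closed[OF assms(1) cont] C(1)])
  then have "finite ({y \<in> topspace Y. p y = z} \<inter> C)"
    by (rule fin_fiber[OF assms(2)]) auto
  then show ?thesis by (rule finite_subset[rotated]) (use C in auto)
qed

lemma bump:
  assumes "Hausdorff_space Y" "locally_compact_space Y" "x \<in> topspace Y"
  obtains \<psi> N L where "openin Y N" "x \<in> N" "compactin Y L" "N \<subseteq> L"
    "continuous_map Y euclideanreal \<psi>" "\<And>y. y \<in> N \<Longrightarrow> \<psi> y = 1"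
    "\<And>y. y \<in> topspace Y - L \<Longrightarrow> \<psi> y = 0" "\<And>y. 0 \<le> \<psi> y" "\<And>y. \<psi> y \<le> 1"
proof -
  have reg: "regular_space Y" using locally_compact_Hausdorff_imp_regular_space[OF assms(2,1)] .
  have creg: "completely_regular_space Y" using completely_regular_eq_regular_space[OF assms(2)] reg by simp
  have nb: "neighbourhood_base_of (\<lambda>C. compactin Y C \<and> closedin Y C) Y"
    using iffD1[OF locally_compact_regular_space_neighbourhood_base[of Y]] assms(2) reg by blast
  have nb': "\<exists>U V. openin Y U \<and> (compactin Y V \<and> closedin Y V) \<and> x \<in> U \<and> U \<subseteq> V \<and> V \<subseteq> W"
    if "openin Y W" "x \<in> W" for W x
    using nb that unfolding neighbourhood_base_of by blast
  obtain N1 L1 where 1: "openin Y N1" "compactin Y L1" "closedin Y L1" "x \<in> N1" "N1 \<subseteq> L1" "L1 \<subseteq> topspace Y"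
    using nb'[OF openin_topspace assms(3)] by (elim exE conjE)
  obtain N2 L2 where 2: "openin Y N2" "compactin Y L2" "closedin Y L2" "x \<in> N2" "N2 \<subseteq> L2" "L2 \<subseteq> N1"
    using nb'[OF 1(1) 1(4)] by (elim exE conjE)
  have dj: "disjnt L2 (topspace Y - N1)" using 2(6) by (auto simp: disjnt_def)
  have cl: "closedin Y (topspace Y - N1)" using 1(1) by (simp add: closedin_diff)
  obtain f :: "_ \<Rightarrow> real" where f: "continuous_map Y (subtopology euclidean {0..1}) f" "f ` (topspace Y - N1) \<subseteq> {0}" "f ` L2 \<subseteq> {1}"
    using Urysohn_completely_regular_compact_closed[OF zero_le_one creg 2(2) cl dj] by blast
  define \<psi> where "\<psi> y = (if y \<in> topspace Y then f y else 0)" for y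
  have cf: "continuous_map Y euclideanreal f" using f(1) continuous_map_in_subtopology by blast
  have c: "continuous_map Y euclideanreal \<psi>"
    by (rule continuous_map_eq[OF cf]) (simp add: \<psi>_def)
  have range: "f y \<in> {0..1}" if "y \<in> topspace Y" for y using f(1) that unfolding continuous_map_def by auto
  have N2sub: "N2 \<subseteq> topspace Y" using openin_subset[OF 2(1)] .
  show ?thesis
  proof (rule that[of N2 L1 \<psi>])
    show "\<psi> y = 1" if "y \<in> N2" for y 
    proof -
      have "y \<in> L2" "y \<in> topspace Y" using that 2(5) N2sub by auto
      then show ?thesis using f(3) unfolding \<psi>_def by auto
    qed
    show "\<psi> y = 0" if "y \<in> topspace Y - L1" for y
    proof -
      have "y \<in> topspace Y - N1" using that 1(5) by auto
      then show ?thesis using f(2) that unfolding \<psi>_def by auto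
    qed
    show "0 \<le> \<psi> y" for y using range unfolding \<psi>_def by auto
    show "\<psi> y \<le> 1" for y using range unfolding \<psi>_def by auto
    show "openin Y N2" "x \<in> N2" "compactin Y L1" "N2 \<subseteq> L1" "continuous_map Y euclideanreal \<psi>"
      using 1 2 c by auto
  qed
qed




context gcorr begin

abbreviation "Dtop \<equiv> subtopology (prod_topology X G) D"

lemma topspace_Dtop: "topspace Dtop = D"
  unfolding D_def by auto

lemma fin_act_into:
  assumes x: "x \<in> topspace X" and L: "compactin X L"
  shows "finite {k \<in> topspace G. rG k = sX x \<and> actR x k \<in> L}"
proof -
  have cK: "compactin (prod_topology X X) ({x} \<times> L)"
    using x L by (simp add: compactin_Times)
  have "compactin Dtop {z \<in> topspace Dtop. (\<lambda>(x, g). (x, actR x g)) z \<in> {x} \<times> L}"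
    using proper cK unfolding proper_map_alt by blast
  moreover have "continuous_map Dtop G snd"
    by (rule continuous_map_from_subtopology[OF continuous_map_snd])
  ultimately have c: "compactin G (snd ` {z \<in> topspace Dtop. (\<lambda>(x, g). (x, actR x g)) z \<in> {x} \<times> L})"
    by (rule image_compactin)
  have eq: "snd ` {z \<in> topspace Dtop. (\<lambda>(x, g). (x, actR x g)) z \<in> {x} \<times> L}
      = {k \<in> topspace G. rG k = sX x \<and> actR x k \<in> L}"
    unfolding topspace_Dtop using x by (auto simp: D_def image_iff)
  show ?thesis
    by (rule fin_fiber[OF lh_r c[unfolded eq]]) auto
qed

lemma ex_bisection_r:
  assumes "g \<in> topspace G"
  obtains B where "openin G B" "g \<in> B" "openin (subtopology G G0) (rG ` B)"
    "homeomorphic_map (subtopology G B) (subtopology (subtopology G G0) (rG ` B)) rG"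
  using lh_r assms unfolding local_homeomorphism_def by blast

end

locale slice = gcorr H H0 rH sH mH iH X rX actL sX actR G G0 rG sG mG iG
  for H :: "'h topology" and H0 rH sH mH iH
    and X :: "'x topology" and rX actL sX actR
    and G :: "'g topology" and G0 rG sG mG iG +
  fixes U :: "'x set" and L :: "'x set" and \<psi> :: "'x \<Rightarrow> real"
  assumes U_open: "openin X U"
    and U_hom: "homeomorphic_map (subtopology X U) (subtopology (subtopology G G0) (sX ` U)) sX"
    and P_open: "openin (subtopology G G0) (sX ` U)"
    and L_comp: "compactin X L" and LU: "L \<subseteq> U"
    and \<psi>_cont: "continuous_map (subtopology X U) euclideanreal \<psi>"
    and \<psi>_zero: "\<And>y. y \<notin> L \<Longrightarrow> \<psi> y = 0"
begin

definition "P = sX ` U"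
definition "\<sigma> u = inv_into U sX u"

lemma U_sub: "U \<subseteq> topspace X" using openin_subset[OF U_open] .

lemma inj_U: "inj_on sX U"
proof -
  have "inj_on sX (topspace (subtopology X U))" using U_hom homeomorphic_imp_injective_map by blast
  then show ?thesis using U_sub by (simp add: Int_absorb1)
qed

lemma P_G0: "P \<subseteq> G0" unfolding P_def using sX_G0 U_sub by auto

lemma \<sigma>_in: "u \<in> P \<Longrightarrow> \<sigma> u \<in> U" unfolding P_def \<sigma>_def by (simp add: inv_into_into)
lemma sX_\<sigma>: "u \<in> P \<Longrightarrow> sX (\<sigma> u) = u" unfolding P_def \<sigma>_def by (simp add: f_inv_into_f)
lemma \<sigma>_sX: "y \<in> U \<Longrightarrow> \<sigma> (sX y) = y" unfolding \<sigma>_def using inj_U by simp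
lemma \<sigma>_X: "u \<in> P \<Longrightarrow> \<sigma> u \<in> topspace X" using \<sigma>_in U_sub by auto

lemma \<sigma>_cont: "continuous_map (subtopology G P) (subtopology X U) \<sigma>"
proof -
  have sub: "subtopology (subtopology G G0) (sX ` U) = subtopology G P"
    unfolding subtopology_subtopology using P_G0 unfolding P_def by (simp add: Int_absorb1)
  obtain g where g: "homeomorphic_maps (subtopology X U) (subtopology G P) sX g"
    using U_hom[unfolded sub] homeomorphic_map_maps by blast
  have cg: "continuous_map (subtopology G P) (subtopology X U) g" and
    fg: "\<forall>y\<in>topspace (subtopology G P). sX (g y) = y" and
    gf: "\<forall>x\<in>topspace (subtopology X U). g (sX x) = x"
    using g unfolding homeomorphic_maps_def by auto
  have gU: "g y \<in> U" if "y \<in> P" for y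
  proof -
    have "y \<in> topspace (subtopology G P)" using that P_G0 G0sub by auto
    then show ?thesis using cg unfolding continuous_map_def by auto
  qed
  show ?thesis
  proof (rule continuous_map_eq[OF cg])
    fix y assume y: "y \<in> topspace (subtopology G P)"
    then have yP: "y \<in> P" by simp
    have "sX (g y) = y" using fg y by blast
    then show "g y = \<sigma> y" using \<sigma>_sX[OF gU[OF yP]] by simp
  qed
qed

lemma W1_open: "openin G {h \<in> topspace G. sG h \<in> P}"
proof -
  have "openin G {h \<in> topspace G. sG h \<in> sX ` U}"
    using openin_continuous_map_preimage[OF cont_s P_open] .
  then show ?thesis unfolding P_def .
qed

definition "Sfin x = {k \<in> topspace G. rG k = sX x \<and> actR x k \<in> L}"

lemma Sfin_finite: "x \<in> topspace X \<Longrightarrow> finite (Sfin x)"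
  unfolding Sfin_def using fin_act_into L_comp by blast

definition "\<Psi> x = infsum (\<lambda>k. (\<psi> (actR x k))\<^sup>2) {k \<in> topspace G. rG k = sX x}"

lemma \<Psi>_sum: assumes "x \<in> topspace X" shows "\<Psi> x = (\<Sum>k\<in>Sfin x. (\<psi> (actR x k))\<^sup>2)"
  unfolding \<Psi>_def
  by (rule infsum_fin[OF Sfin_finite[OF assms]]) (auto simp: Sfin_def \<psi>_zero)

lemma \<Psi>_nonneg: "x \<in> topspace X \<Longrightarrow> 0 \<le> \<Psi> x"
  using \<Psi>_sum by (simp add: sum_nonneg)

lemma \<Psi>_ge: assumes x: "x \<in> topspace X" shows "(\<psi> x)\<^sup>2 \<le> \<Psi> x"
proof (cases "x \<in> L")
  case True
  have u: "sX x \<in> Sfin x" unfolding Sfin_def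
    using x True act_unit sX_G0 G0sub rG_unit by auto
  have "(\<psi> x)\<^sup>2 = (\<psi> (actR x (sX x)))\<^sup>2" using act_unit x by simp
  also have "\<dots> \<le> (\<Sum>k\<in>Sfin x. (\<psi> (actR x k))\<^sup>2)"
    by (rule member_le_sum[OF u]) (auto intro: Sfin_finite x)
  finally show ?thesis using \<Psi>_sum x by simp
next
  case False
  then show ?thesis using \<psi>_zero \<Psi>_nonneg x by simp
qed

lemma \<Psi>_inv: assumes x: "x \<in> topspace X" and g: "g \<in> topspace G" and xg: "sX x = rG g"
  shows "\<Psi> (actR x g) = \<Psi> x"
proof -
  have ig: "iG g \<in> topspace G" using iG_G g .
  have bij: "bij_betw (mG g) {k \<in> topspace G. rG k = sG g} {k \<in> topspace G. rG k = sX x}"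
  proof (rule bij_betw_byWitness[where f' = "mG (iG g)"])
    show "\<forall>a\<in>{k \<in> topspace G. rG k = sG g}. mG (iG g) (mG g a) = a"
    proof
      fix a assume a: "a \<in> {k \<in> topspace G. rG k = sG g}"
      then have "mG (iG g) (mG g a) = mG (mG (iG g) g) a"
        using mG_assoc[OF ig g] sG_i g by auto
      also have "\<dots> = a"
      proof -
        have a1: "a \<in> topspace G" "rG a = sG g" using a by auto
        show ?thesis using m_ig_g[OF g] mG_runit[OF a1(1)] a1(2) by simp
      qed
      finally show "mG (iG g) (mG g a) = a" .
    qed
    show "\<forall>a'\<in>{k \<in> topspace G. rG k = sX x}. mG g (mG (iG g) a') = a'"
    proof
      fix a assume a: "a \<in> {k \<in> topspace G. rG k = sX x}"
      then have "mG g (mG (iG g) a) = mG (mG g (iG g)) a"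
        using mG_assoc[OF g ig] sG_i rG_i g xg by auto
      also have "\<dots> = a"
      proof -
        have a1: "a \<in> topspace G" "rG a = rG g" using a xg by auto
        show ?thesis using m_g_ig[OF g] mG_runit[OF a1(1)] a1(2) by simp
      qed
      finally show "mG g (mG (iG g) a) = a" .
    qed
    show "mG g ` {k \<in> topspace G. rG k = sG g} \<subseteq> {k \<in> topspace G. rG k = sX x}"
      using mG_G rG_m g xg by auto
    show "mG (iG g) ` {k \<in> topspace G. rG k = sX x} \<subseteq> {k \<in> topspace G. rG k = sG g}"
      using mG_G rG_m ig rG_i sG_i g xg by auto
  qed
  have "\<Psi> x = infsum (\<lambda>k. (\<psi> (actR x (mG g k)))\<^sup>2) {k \<in> topspace G. rG k = sG g}"
    unfolding \<Psi>_def using infsum_reindex_bij_betw[OF bij, of "\<lambda>k. (\<psi> (actR x k))\<^sup>2"] by simp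
  also have "\<dots> = \<Psi> (actR x g)"
    unfolding \<Psi>_def sX_act[OF x g xg]
  proof (intro infsum_cong)
    fix k assume "k \<in> {k \<in> topspace G. rG k = sG g}"
    then have k: "k \<in> topspace G" "sG g = rG k" by auto
    show "(\<psi> (actR x (mG g k)))\<^sup>2 = (\<psi> (actR (actR x g) k))\<^sup>2"
      using act_assoc[OF x g k(1) xg k(2)] by simp
  qed
  finally show ?thesis by simp
qed

end



lemma local_cont:
  assumes "\<And>x. x \<in> topspace A \<Longrightarrow> \<exists>W. openin A W \<and> x \<in> W \<and> continuous_map (subtopology A W) B f"
  shows "continuous_map A B f"
proof -
  have ex: "\<forall>x\<in>topspace A. \<exists>W. openin A W \<and> x \<in> W \<and> continuous_map (subtopology A W) B f"
    using assms by blast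
  obtain WW where WW: "\<forall>x\<in>topspace A. openin A (WW x) \<and> x \<in> WW x \<and> continuous_map (subtopology A (WW x)) B f"
    using bchoice[OF ex] by blast
  show ?thesis
    by (rule pasting_lemma[of "topspace A" A WW B "\<lambda>_. f" f]) (use WW in auto)
qed

lemma homeo_inv:
  assumes h: "homeomorphic_map (subtopology A U) (subtopology B (f ` U)) f" and U: "U \<subseteq> topspace A"
  shows "continuous_map (subtopology B (f ` U)) (subtopology A U) (inv_into U f)"
    and "inj_on f U"
proof -
  have inj: "inj_on f (topspace (subtopology A U))" using h homeomorphic_imp_injective_map by blast
  then show injU: "inj_on f U" using U by (simp add: Int_absorb1)
  obtain g where g: "homeomorphic_maps (subtopology A U) (subtopology B (f ` U)) f g"
    using h homeomorphic_map_maps by blast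
  have cg: "continuous_map (subtopology B (f ` U)) (subtopology A U) g" and
    fg: "\<forall>y\<in>topspace (subtopology B (f ` U)). f (g y) = y"
    using g unfolding homeomorphic_maps_def by auto
  show "continuous_map (subtopology B (f ` U)) (subtopology A U) (inv_into U f)"
  proof (rule continuous_map_eq[OF cg])
    fix y assume y: "y \<in> topspace (subtopology B (f ` U))"
    then have gU: "g y \<in> U" using cg unfolding continuous_map_def by auto
    have "f (g y) = y" using fg y by blast
    then show "g y = inv_into U f y" using injU gU by (metis inv_into_f_f)
  qed
qed

lemma hausdorff_sep:
  assumes Hs: "Hausdorff_space Z" and fin: "finite S" and sub: "S \<subseteq> topspace Z"
  obtains W where "\<And>a. a \<in> S \<Longrightarrow> openin Z (W a) \<and> a \<in> W a"
    "\<And>a b. a \<in> S \<Longrightarrow> b \<in> S \<Longrightarrow> a \<noteq> b \<Longrightarrow> W a \<inter> W b = {}"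
proof -
  have ex: "\<forall>p\<in>{(a,b). a \<in> topspace Z \<and> b \<in> topspace Z \<and> a \<noteq> b}. \<exists>UV. openin Z (fst UV) \<and> openin Z (snd UV) \<and>
       fst p \<in> fst UV \<and> snd p \<in> snd UV \<and> disjnt (fst UV) (snd UV)"
  proof
    fix p assume "p \<in> {(a,b). a \<in> topspace Z \<and> b \<in> topspace Z \<and> a \<noteq> b}"
    then have p: "fst p \<in> topspace Z" "snd p \<in> topspace Z" "fst p \<noteq> snd p" by auto
    obtain U V where UV: "openin Z U" "openin Z V" "fst p \<in> U" "snd p \<in> V" "disjnt U V"
      using Hs p unfolding Hausdorff_space_def by metis
    show "\<exists>UV. openin Z (fst UV) \<and> openin Z (snd UV) \<and>
       fst p \<in> fst UV \<and> snd p \<in> snd UV \<and> disjnt (fst UV) (snd UV)"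
      by (rule exI[of _ "(U, V)"]) (use UV in simp)
  qed
  obtain F where F: "\<forall>p\<in>{(a,b). a \<in> topspace Z \<and> b \<in> topspace Z \<and> a \<noteq> b}. openin Z (fst (F p)) \<and> openin Z (snd (F p)) \<and>
       fst p \<in> fst (F p) \<and> snd p \<in> snd (F p) \<and> disjnt (fst (F p)) (snd (F p))"
    using bchoice[OF ex] by blast
  define Ob where "Ob a b = fst (F (a, b)) \<inter> snd (F (b, a))" for a b
  have O1: "openin Z (Ob a b) \<and> a \<in> Ob a b" if "a \<in> S" "b \<in> S" "a \<noteq> b" for a b
  proof -
    have "(a, b) \<in> {(a,b). a \<in> topspace Z \<and> b \<in> topspace Z \<and> a \<noteq> b}"
         "(b, a) \<in> {(a,b). a \<in> topspace Z \<and> b \<in> topspace Z \<and> a \<noteq> b}" using that sub by auto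
    then have "openin Z (fst (F (a, b)))" "openin Z (snd (F (b, a)))" "a \<in> fst (F (a, b))" "a \<in> snd (F (b, a))"
      using F by auto
    then show ?thesis unfolding Ob_def by auto
  qed
  have O2: "Ob a b \<inter> Ob b a = {}" if "a \<in> S" "b \<in> S" "a \<noteq> b" for a b
  proof -
    have "(a, b) \<in> {(a,b). a \<in> topspace Z \<and> b \<in> topspace Z \<and> a \<noteq> b}" using that sub by auto
    then have "disjnt (fst (F (a,b))) (snd (F (a,b)))" using F by auto
    then show ?thesis unfolding Ob_def disjnt_def by auto
  qed
  define W where "W a = \<Inter> (insert (topspace Z) (Ob a ` (S - {a})))" for a
  show ?thesis
  proof (rule that[of W])
    fix a assume a: "a \<in> S"
    have "openin Z (W a)" unfolding W_def
      by (rule openin_Inter) (use fin O1 a in auto)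
    moreover have "a \<in> W a" unfolding W_def using O1 a sub by auto
    ultimately show "openin Z (W a) \<and> a \<in> W a" by blast
  next
    fix a b assume ab: "a \<in> S" "b \<in> S" "a \<noteq> b"
    have "W a \<subseteq> Ob a b" "W b \<subseteq> Ob b a" unfolding W_def using ab by auto
    then show "W a \<inter> W b = {}" using O2[OF ab] by blast
  qed
qed




context slice begin

lemma \<Psi>_local:
  assumes x0: "x0 \<in> topspace X"
  shows "\<exists>N. openin X N \<and> x0 \<in> N \<and> continuous_map (subtopology X N) euclideanreal \<Psi>"
proof -
  define T0 where "T0 = Sfin x0"
  have finT0: "finite T0" unfolding T0_def using Sfin_finite x0 .
  have T0: "k \<in> topspace G" "rG k = sX x0" "actR x0 k \<in> L" if "k \<in> T0" for k
    using that unfolding T0_def Sfin_def by auto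
  have exB: "\<forall>k\<in>topspace G. \<exists>B. openin G B \<and> k \<in> B \<and> openin (subtopology G G0) (rG ` B) \<and>
    homeomorphic_map (subtopology G B) (subtopology (subtopology G G0) (rG ` B)) rG"
    using lh_r unfolding local_homeomorphism_def by blast
  obtain BB where BB: "\<forall>k\<in>topspace G. openin G (BB k) \<and> k \<in> BB k \<and> openin (subtopology G G0) (rG ` BB k) \<and>
    homeomorphic_map (subtopology G (BB k)) (subtopology (subtopology G G0) (rG ` BB k)) rG"
    using bchoice[OF exB] by blast
  define \<iota> where "\<iota> k = inv_into (BB k) rG" for k
  have BBo: "openin G (BB k)" "k \<in> BB k" "openin (subtopology G G0) (rG ` BB k)"
    "BB k \<subseteq> topspace G" if "k \<in> T0" for k
    using BB T0(1)[OF that] openin_subset by auto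
  have \<iota>c: "continuous_map (subtopology (subtopology G G0) (rG ` BB k)) (subtopology G (BB k)) (\<iota> k)"
    and injB: "inj_on rG (BB k)" if "k \<in> T0" for k
    unfolding \<iota>_def using homeo_inv[of G "BB k" "subtopology G G0" rG] BB T0(1)[OF that] BBo(4)[OF that] by auto
  have \<iota>r: "\<iota> k (rG h) = h" if "k \<in> T0" "h \<in> BB k" for k h
    unfolding \<iota>_def using injB[OF that(1)] that(2) by simp
  have \<iota>in: "\<iota> k u \<in> BB k" "rG (\<iota> k u) = u" if "k \<in> T0" "u \<in> rG ` BB k" for k u
    unfolding \<iota>_def using that by (auto simp: inv_into_into f_inv_into_f)
  have sT0: "sG ` T0 \<subseteq> topspace (subtopology G G0)" using T0 sG_G0 G0sub by auto
  obtain Ws where Ws: "\<And>a. a \<in> sG ` T0 \<Longrightarrow> openin (subtopology G G0) (Ws a) \<and> a \<in> Ws a"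
    "\<And>a b. a \<in> sG ` T0 \<Longrightarrow> b \<in> sG ` T0 \<Longrightarrow> a \<noteq> b \<Longrightarrow> Ws a \<inter> Ws b = {}"
    using hausdorff_sep[OF G0_Hausdorff finite_imageI[OF finT0] sT0] by blast
  define W where "W k = Ws (sG k)" for k
  have s_inj: "k = l" if "k \<in> T0" "l \<in> T0" "sG k = sG l" for k l
  proof -
    have "sX (actR x0 k) = sX (actR x0 l)" using sX_act x0 T0 that by metis
    moreover have "actR x0 k \<in> U" "actR x0 l \<in> U" using T0 that LU by auto
    ultimately have "actR x0 k = actR x0 l" using inj_U unfolding inj_on_def by blast
    then show ?thesis using act_cancel[OF x0 T0(1)[OF that(1)] T0(1)[OF that(2)]] T0 that by metis
  qed
  have Wo: "openin (subtopology G G0) (W k)" "sG k \<in> W k" if "k \<in> T0" for k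
    unfolding W_def using Ws(1) that by auto
  have Wd: "W k \<inter> W l = {}" if "k \<in> T0" "l \<in> T0" "k \<noteq> l" for k l
    unfolding W_def using Ws(2) that s_inj by blast
  define OG where "OG = (\<Union>k\<in>T0. {h \<in> BB k. sG h \<in> W k})"
  have OGo: "openin G OG"
  proof -
    have "openin G {h \<in> BB k. sG h \<in> W k}" if "k \<in> T0" for k
    proof -
      have "openin G {h \<in> topspace G. sG h \<in> W k}"
        using openin_continuous_map_preimage[OF cont_s Wo(1)[OF that]] .
      then have "openin G (BB k \<inter> {h \<in> topspace G. sG h \<in> W k})" using BBo(1)[OF that] by blast
      moreover have "BB k \<inter> {h \<in> topspace G. sG h \<in> W k} = {h \<in> BB k. sG h \<in> W k}" using BBo(4)[OF that] by auto
      ultimately show ?thesis by simp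
    qed
    then show ?thesis unfolding OG_def by blast
  qed
  define \<Phi> where "\<Phi> = (\<lambda>(x, g). (x, actR x g))"
  have cm: "closed_map Dtop (prod_topology X X) \<Phi>" using proper unfolding proper_map_def \<Phi>_def by blast
  define D' where "D' = topspace Dtop - {z \<in> topspace Dtop. snd z \<in> OG}"
  have "openin Dtop {z \<in> topspace Dtop. snd z \<in> OG}"
    by (rule openin_continuous_map_preimage[OF continuous_map_from_subtopology[OF continuous_map_snd] OGo])
  then have "closedin Dtop D'" unfolding D'_def by (intro closedin_diff closedin_topspace)
  then have cl: "closedin (prod_topology X X) (\<Phi> ` D')" using cm unfolding closed_map_def by blast
  define C' where "C' = topspace (prod_topology X X) - \<Phi> ` D'"
  have C'o: "openin (prod_topology X X) C'" unfolding C'_def using cl by (intro openin_diff openin_topspace)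
  have LX: "L \<subseteq> topspace X" using LU U_sub by auto
  have subC: "{x0} \<times> L \<subseteq> C'"
  proof
    fix z assume z: "z \<in> {x0} \<times> L"
    then obtain y where y: "z = (x0, y)" "y \<in> L" by auto
    have "z \<notin> \<Phi> ` D'"
    proof
      assume "z \<in> \<Phi> ` D'"
      then obtain x k where xk: "(x, k) \<in> D'" "\<Phi> (x, k) = z" by auto
      then have "x = x0" "actR x0 k = y" using y unfolding \<Phi>_def by auto
      moreover have "(x, k) \<in> D" "k \<notin> OG" using xk(1) unfolding D'_def topspace_Dtop by auto
      ultimately have "k \<in> T0" "k \<notin> OG" using y unfolding T0_def Sfin_def D_def by auto
      then show False using BBo(2) Wo(2) unfolding OG_def by auto
    qed
    then show "z \<in> C'" unfolding C'_def using z x0 LX by auto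
  qed
  obtain U' V' where UV: "openin X U'" "openin X V'" "x0 \<in> U'" "L \<subseteq> V'" "U' \<times> V' \<subseteq> C'"
    using tube_lemma_right[OF C'o L_comp x0 subC] by auto
  have tube: "k \<in> OG" if "x \<in> U'" "k \<in> topspace G" "rG k = sX x" "actR x k \<in> L" for x k
  proof (rule ccontr)
    assume nk: "k \<notin> OG"
    have xX: "x \<in> topspace X" using that(1) openin_subset[OF UV(1)] by blast
    have "(x, k) \<in> D" unfolding D_def using xX that(2,3) by simp
    then have "(x, k) \<in> D'" unfolding D'_def topspace_Dtop using nk by simp
    then have "\<Phi> (x, k) \<in> \<Phi> ` D'" by (rule imageI)
    then have n: "\<Phi> (x, k) \<notin> C'" unfolding C'_def by (meson DiffD2)
    have "\<Phi> (x, k) \<in> U' \<times> V'" using that(1,4) UV(4) unfolding \<Phi>_def by auto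
    then show False using UV(5) n by (meson subsetD)
  qed
  define M1 where "M1 k = {x \<in> topspace X. sX x \<in> rG ` BB k}" for k
  define \<kappa> where "\<kappa> k x = \<iota> k (sX x)" for k x
  have M1o: "openin X (M1 k)" if "k \<in> T0" for k
    unfolding M1_def by (rule openin_continuous_map_preimage[OF cont_sX BBo(3)[OF that]])
  have \<kappa>in: "\<kappa> k x \<in> BB k" "rG (\<kappa> k x) = sX x" "\<kappa> k x \<in> topspace G" if "k \<in> T0" "x \<in> M1 k" for k x
    using \<iota>in[OF that(1)] that BBo(4)[OF that(1)] unfolding \<kappa>_def M1_def by auto
  have \<kappa>c: "continuous_map (subtopology X (M1 k)) G (\<kappa> k)" if k: "k \<in> T0" for k
  proof -
    have "continuous_map (subtopology X (M1 k)) (subtopology (subtopology G G0) (rG ` BB k)) sX"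
      by (rule continuous_map_into_subtopology[OF continuous_map_from_subtopology[OF cont_sX]])
        (auto simp: M1_def)
    then have "continuous_map (subtopology X (M1 k)) (subtopology G (BB k)) (\<iota> k \<circ> sX)"
      using \<iota>c[OF k] by (rule continuous_map_compose)
    then have "continuous_map (subtopology X (M1 k)) G (\<iota> k \<circ> sX)"
      using continuous_map_in_subtopology by blast
    then show ?thesis unfolding \<kappa>_def o_def by simp
  qed
  have actc: "continuous_map (subtopology X (M1 k)) X (\<lambda>x. actR x (\<kappa> k x))" if k: "k \<in> T0" for k
  proof -
    have "continuous_map (subtopology X (M1 k)) (prod_topology X G) (\<lambda>x. (x, \<kappa> k x))"
      by (intro continuous_map_pairedI continuous_map_from_subtopology[OF continuous_map_id[unfolded id_def]] \<kappa>c[OF k])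
    moreover have "(\<lambda>x. (x, \<kappa> k x)) \<in> topspace (subtopology X (M1 k)) \<rightarrow> D"
      using \<kappa>in[OF k] unfolding D_def M1_def by auto
    ultimately have "continuous_map (subtopology X (M1 k)) Dtop (\<lambda>x. (x, \<kappa> k x))"
      by (rule continuous_map_into_subtopology)
    then have "continuous_map (subtopology X (M1 k)) X ((\<lambda>(x, g). actR x g) \<circ> (\<lambda>x. (x, \<kappa> k x)))"
      using cont_act by (rule continuous_map_compose)
    then show ?thesis unfolding o_def by simp
  qed
  define M where "M k = {x \<in> topspace (subtopology X (M1 k)). sG (\<kappa> k x) \<in> W k \<and> actR x (\<kappa> k x) \<in> U}" for k
  have Mo: "openin X (M k)" if k: "k \<in> T0" for k
  proof -
    have c1: "continuous_map (subtopology X (M1 k)) (subtopology G G0) (sG \<circ> \<kappa> k)"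
      using \<kappa>c[OF k] cont_s by (rule continuous_map_compose)
    have o1: "openin (subtopology X (M1 k)) {x \<in> topspace (subtopology X (M1 k)). (sG \<circ> \<kappa> k) x \<in> W k}"
      by (rule openin_continuous_map_preimage[OF c1 Wo(1)[OF k]])
    have o2: "openin (subtopology X (M1 k)) {x \<in> topspace (subtopology X (M1 k)). actR x (\<kappa> k x) \<in> U}"
      by (rule openin_continuous_map_preimage[OF actc[OF k] U_open])
    have eq: "M k = {x \<in> topspace (subtopology X (M1 k)). (sG \<circ> \<kappa> k) x \<in> W k} \<inter>
       {x \<in> topspace (subtopology X (M1 k)). actR x (\<kappa> k x) \<in> U}"
      unfolding M_def o_def by auto
    have "openin (subtopology X (M1 k)) (M k)"
      unfolding eq by (rule openin_Int[OF o1 o2])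
    then show ?thesis by (rule openin_trans_full[OF _ M1o[OF k]])
  qed
  have MM1: "M k \<subseteq> M1 k" for k unfolding M_def by auto
  have x0M: "x0 \<in> M k" if k: "k \<in> T0" for k
  proof -
    have "sX x0 \<in> rG ` BB k" using T0(2)[OF k] BBo(2)[OF k] by (metis image_eqI)
    then have m1: "x0 \<in> M1 k" unfolding M1_def using x0 by simp
    have "\<kappa> k x0 = k" unfolding \<kappa>_def using \<iota>r[OF k BBo(2)[OF k]] T0(2)[OF k] by simp
    then show ?thesis unfolding M_def using m1 x0 Wo(2)[OF k] T0(3)[OF k] LU by auto
  qed
  define N where "N = \<Inter> (insert U' (M ` T0))"
  have No: "openin X N" unfolding N_def
  proof (rule openin_Inter)
    show "finite (insert U' (M ` T0))" using finT0 by simp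
    show "insert U' (M ` T0) \<noteq> {}" by simp
    fix S assume "S \<in> insert U' (M ` T0)"
    then show "openin X S" using UV(1) Mo by blast
  qed
  have x0N: "x0 \<in> N" unfolding N_def using UV(3) x0M by auto
  have NM: "N \<subseteq> M k" if "k \<in> T0" for k unfolding N_def using that by auto
  have NU': "N \<subseteq> U'" unfolding N_def by auto
  have formula: "\<Psi> x = (\<Sum>k\<in>T0. (\<psi> (actR x (\<kappa> k x)))\<^sup>2)" if xN: "x \<in> N" for x
  proof -
    have xX: "x \<in> topspace X" using xN NU' openin_subset[OF UV(1)] by auto
    have xM1: "x \<in> M1 k" if "k \<in> T0" for k using xN NM[OF that] MM1 by auto
    have xM: "x \<in> M k" if "k \<in> T0" for k using xN NM[OF that] by auto
    have inj: "inj_on (\<lambda>k. \<kappa> k x) T0"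
    proof (rule inj_onI)
      fix k l assume kl: "k \<in> T0" "l \<in> T0" "\<kappa> k x = \<kappa> l x"
      have "sG (\<kappa> k x) \<in> W k" "sG (\<kappa> l x) \<in> W l" using xM kl(1,2) unfolding M_def by auto
      then have "W k \<inter> W l \<noteq> {}" using kl(3) by auto
      then show "k = l" using Wd kl(1,2) by blast
    qed
    have sub: "Sfin x \<subseteq> (\<lambda>k. \<kappa> k x) ` T0"
    proof
      fix h assume h: "h \<in> Sfin x"
      then have h1: "h \<in> topspace G" "rG h = sX x" "actR x h \<in> L" unfolding Sfin_def by auto
      have "h \<in> OG" using tube[OF _ h1] xN NU' by auto
      then obtain k where k: "k \<in> T0" "h \<in> BB k" "sG h \<in> W k" unfolding OG_def by auto
      have "\<kappa> k x = h" unfolding \<kappa>_def using \<iota>r[OF k(1,2)] h1(2) by simp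
      then show "h \<in> (\<lambda>k. \<kappa> k x) ` T0" using k(1) by auto
    qed
    have "(\<Sum>k\<in>T0. (\<psi> (actR x (\<kappa> k x)))\<^sup>2) = (\<Sum>h\<in>(\<lambda>k. \<kappa> k x) ` T0. (\<psi> (actR x h))\<^sup>2)"
      using sum.reindex[OF inj, of "\<lambda>h. (\<psi> (actR x h))\<^sup>2"] by simp
    also have "\<dots> = (\<Sum>h\<in>Sfin x. (\<psi> (actR x h))\<^sup>2)"
    proof (rule sum.mono_neutral_right)
      show "finite ((\<lambda>k. \<kappa> k x) ` T0)" using finT0 by simp
      show "Sfin x \<subseteq> (\<lambda>k. \<kappa> k x) ` T0" using sub .
      show "\<forall>i\<in>(\<lambda>k. \<kappa> k x) ` T0 - Sfin x. (\<psi> (actR x i))\<^sup>2 = 0"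
      proof
        fix i assume i: "i \<in> (\<lambda>k. \<kappa> k x) ` T0 - Sfin x"
        then obtain k where k: "k \<in> T0" "i = \<kappa> k x" by auto
        have "i \<in> topspace G" "rG i = sX x" using \<kappa>in[OF k(1) xM1[OF k(1)]] k(2) by auto
        then have "actR x i \<notin> L" using i unfolding Sfin_def by auto
        then show "(\<psi> (actR x i))\<^sup>2 = 0" using \<psi>_zero by simp
      qed
    qed
    finally show ?thesis using \<Psi>_sum[OF xX] by simp
  qed
  have termc: "continuous_map (subtopology X N) euclideanreal (\<lambda>x. (\<psi> (actR x (\<kappa> k x)))\<^sup>2)"
    if k: "k \<in> T0" for k
  proof -
    have "continuous_map (subtopology X (M k)) X (\<lambda>x. actR x (\<kappa> k x))"
      using continuous_map_from_subtopology_mono[OF actc[OF k] MM1] .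
    moreover have "(\<lambda>x. actR x (\<kappa> k x)) \<in> topspace (subtopology X (M k)) \<rightarrow> U"
      unfolding M_def by auto
    ultimately have "continuous_map (subtopology X (M k)) (subtopology X U) (\<lambda>x. actR x (\<kappa> k x))"
      by (rule continuous_map_into_subtopology)
    then have "continuous_map (subtopology X (M k)) euclideanreal (\<psi> \<circ> (\<lambda>x. actR x (\<kappa> k x)))"
      using \<psi>_cont by (rule continuous_map_compose)
    then have c: "continuous_map (subtopology X N) euclideanreal (\<lambda>x. \<psi> (actR x (\<kappa> k x)))"
      using continuous_map_from_subtopology_mono NM[OF k] unfolding o_def by blast
    show ?thesis unfolding power2_eq_square by (rule continuous_map_real_mult[OF c c])
  qed
  have "continuous_map (subtopology X N) euclideanreal (\<lambda>x. \<Sum>k\<in>T0. (\<psi> (actR x (\<kappa> k x)))\<^sup>2)"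
    by (rule continuous_map_sum[OF finT0]) (use termc in auto)
  then have "continuous_map (subtopology X N) euclideanreal \<Psi>"
    by (rule continuous_map_eq) (use formula in auto)
  then show ?thesis using No x0N by blast
qed

lemma \<Psi>_cont: "continuous_map X euclideanreal \<Psi>"
  by (rule local_cont) (use \<Psi>_local in blast)

end



lemma continuous_map_cmult:
  fixes f g :: "'a \<Rightarrow> 'b::real_normed_algebra"
  shows "continuous_map X euclidean f \<Longrightarrow> continuous_map X euclidean g \<Longrightarrow> continuous_map X euclidean (\<lambda>x. f x * g x)"
  by (simp add: continuous_map_atin tendsto_mult)

lemma continuous_map_cnj_comp:
  "continuous_map X euclidean f \<Longrightarrow> continuous_map X euclidean (\<lambda>x. cnj (f x))"
  by (simp add: continuous_map_atin tendsto_cnj)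

lemma continuous_map_of_real_comp:
  "continuous_map X euclideanreal f \<Longrightarrow> continuous_map X euclidean (\<lambda>x. complex_of_real (f x))"
  by (simp add: continuous_map_atin tendsto_of_real)

context slice begin

definition aa :: "('x \<Rightarrow> complex) \<Rightarrow> 'g \<Rightarrow> complex" where
  "aa \<xi> h = (if h \<in> topspace G \<and> sG h \<in> P
     then cnj (\<xi> (actR (\<sigma> (sG h)) (iG h))) * complex_of_real (\<psi> (\<sigma> (sG h))) else 0)"

lemma xh_facts:
  assumes h: "h \<in> topspace G" "sG h \<in> P"
  shows "\<sigma> (sG h) \<in> topspace X" "sX (\<sigma> (sG h)) = rG (iG h)"
    "actR (\<sigma> (sG h)) (iG h) \<in> topspace X" "sX (actR (\<sigma> (sG h)) (iG h)) = rG h"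
    "actR (actR (\<sigma> (sG h)) (iG h)) h = \<sigma> (sG h)"
proof -
  show y: "\<sigma> (sG h) \<in> topspace X" using \<sigma>_X h(2) .
  show ys: "sX (\<sigma> (sG h)) = rG (iG h)" using sX_\<sigma> h rG_i by simp
  have ih: "iG h \<in> topspace G" using iG_G h(1) .
  show "actR (\<sigma> (sG h)) (iG h) \<in> topspace X" using act_X[OF y ih ys] .
  show "sX (actR (\<sigma> (sG h)) (iG h)) = rG h" using sX_act[OF y ih ys] sG_i h(1) by simp
  show "actR (actR (\<sigma> (sG h)) (iG h)) h = \<sigma> (sG h)"
    using act_inv[OF y ih ys] ii[OF h(1)] by simp
qed

lemma U_Hausdorff: "Hausdorff_space (subtopology X U)"
proof -
  have "Hausdorff_space (subtopology (subtopology G G0) (sX ` U))"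
    using G0_Hausdorff Hausdorff_space_subtopology by blast
  then show ?thesis
    using homeomorphic_Hausdorff_space[OF homeomorphic_map_imp_homeomorphic_space[OF U_hom]] by blast
qed

lemma aa_Cc:
  assumes b: "Cc_extension X b"
  shows "Cc_extension G (aa b)"
proof -
  obtain V K where V: "openin X V" "Hausdorff_space (subtopology X V)"
    "continuous_map (subtopology X V) euclidean b" "compactin (subtopology X V) K"
    "\<forall>y\<in>V - K. b y = 0" "\<forall>y. y \<notin> V \<longrightarrow> b y = 0"
    using b unfolding Cc_extension_def by blast
  have K: "compactin X K" "K \<subseteq> V" using V(4) unfolding compactin_subtopology by auto
  define W1 where "W1 = {h \<in> topspace G. sG h \<in> P}"
  have W1o: "openin G W1" unfolding W1_def using W1_open .
  define \<theta>0 where "\<theta>0 h = \<sigma> (sG h)" for h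
  define \<theta>1 where "\<theta>1 h = actR (\<sigma> (sG h)) (iG h)" for h
  have sc: "continuous_map (subtopology G W1) (subtopology G P) sG"
  proof (rule continuous_map_into_subtopology)
    show "continuous_map (subtopology G W1) G sG"
      using continuous_map_from_subtopology[OF cont_s] continuous_map_in_subtopology by blast
    show "sG \<in> topspace (subtopology G W1) \<rightarrow> P" unfolding W1_def by auto
  qed
  have \<theta>0c: "continuous_map (subtopology G W1) (subtopology X U) \<theta>0"
    using continuous_map_compose[OF sc \<sigma>_cont] unfolding \<theta>0_def o_def by simp
  have \<theta>0cX: "continuous_map (subtopology G W1) X \<theta>0"
    using \<theta>0c continuous_map_in_subtopology by blast
  have \<theta>1c: "continuous_map (subtopology G W1) X \<theta>1"
  proof -
    have "continuous_map (subtopology G W1) (prod_topology X G) (\<lambda>h. (\<theta>0 h, iG h))"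
      by (intro continuous_map_pairedI \<theta>0cX continuous_map_from_subtopology[OF cont_i])
    moreover have "(\<lambda>h. (\<theta>0 h, iG h)) \<in> topspace (subtopology G W1) \<rightarrow> D"
      unfolding D_def W1_def \<theta>0_def using xh_facts iG_G by auto
    ultimately have "continuous_map (subtopology G W1) Dtop (\<lambda>h. (\<theta>0 h, iG h))"
      by (rule continuous_map_into_subtopology)
    then have "continuous_map (subtopology G W1) X ((\<lambda>(x, g). actR x g) \<circ> (\<lambda>h. (\<theta>0 h, iG h)))"
      using cont_act by (rule continuous_map_compose)
    then show ?thesis unfolding o_def \<theta>1_def \<theta>0_def by simp
  qed
  define Wb where "Wb = {h \<in> topspace (subtopology G W1). \<theta>1 h \<in> V}"
  have Wbo: "openin G Wb"
  proof -
    have "openin (subtopology G W1) Wb" unfolding Wb_def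
      by (rule openin_continuous_map_preimage[OF \<theta>1c V(1)])
    then show ?thesis by (rule openin_trans_full[OF _ W1o])
  qed
  have WbW1: "Wb \<subseteq> W1" unfolding Wb_def by auto
  have Wb_in: "h \<in> topspace G" "sG h \<in> P" "\<theta>1 h \<in> V" if "h \<in> Wb" for h
    using that unfolding Wb_def W1_def by auto
  have Hs: "Hausdorff_space (subtopology G Wb)"
  proof (rule Hausdorff_space_injective_preimage)
    show "Hausdorff_space (prod_topology (subtopology X V) (subtopology X U))"
      using V(2) U_Hausdorff Hausdorff_space_prod_topology by blast
    have c1: "continuous_map (subtopology G Wb) (subtopology X V) \<theta>1"
      by (rule continuous_map_into_subtopology[OF continuous_map_from_subtopology_mono[OF \<theta>1c WbW1]])
         (use Wb_in in auto)
    have c0: "continuous_map (subtopology G Wb) (subtopology X U) \<theta>0"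
      by (rule continuous_map_from_subtopology_mono[OF \<theta>0c WbW1])
    show "continuous_map (subtopology G Wb) (prod_topology (subtopology X V) (subtopology X U)) (\<lambda>h. (\<theta>1 h, \<theta>0 h))"
      by (intro continuous_map_pairedI c0 c1)
    show "inj_on (\<lambda>h. (\<theta>1 h, \<theta>0 h)) (topspace (subtopology G Wb))"
    proof (rule inj_onI)
      fix h h' assume hh: "h \<in> topspace (subtopology G Wb)" "h' \<in> topspace (subtopology G Wb)"
        "(\<theta>1 h, \<theta>0 h) = (\<theta>1 h', \<theta>0 h')"
      have h: "h \<in> topspace G" "sG h \<in> P" and h': "h' \<in> topspace G" "sG h' \<in> P"
        using hh(1,2) Wb_in by auto
      have e0: "\<sigma> (sG h) = \<sigma> (sG h')" using hh(3) unfolding \<theta>0_def by simp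
      then have ss: "sG h = sG h'" using sX_\<sigma> h(2) h'(2) by metis
      have e1: "actR (\<sigma> (sG h)) (iG h) = actR (\<sigma> (sG h)) (iG h')" using hh(3) e0 unfolding \<theta>1_def by simp
      have "iG h = iG h'"
        by (rule act_cancel[OF xh_facts(1)[OF h] iG_G[OF h(1)] iG_G[OF h'(1)] xh_facts(2)[OF h] _ e1])
           (use xh_facts(2)[OF h] ss rG_i h h' in simp)
      then show "h = h'" using ii h(1) h'(1) by metis
    qed
  qed
  have Cc: "continuous_map (subtopology G Wb) euclidean (aa b)"
  proof -
    have c1: "continuous_map (subtopology G Wb) (subtopology X V) \<theta>1"
      by (rule continuous_map_into_subtopology[OF continuous_map_from_subtopology_mono[OF \<theta>1c WbW1]])
         (use Wb_in in auto)
    have cb: "continuous_map (subtopology G Wb) euclidean (\<lambda>h. b (\<theta>1 h))"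
      using continuous_map_compose[OF c1 V(3)] unfolding o_def .
    have c0: "continuous_map (subtopology G Wb) euclideanreal (\<lambda>h. \<psi> (\<theta>0 h))"
      using continuous_map_compose[OF continuous_map_from_subtopology_mono[OF \<theta>0c WbW1] \<psi>_cont]
      unfolding o_def .
    have "continuous_map (subtopology G Wb) euclidean (\<lambda>h. cnj (b (\<theta>1 h)) * complex_of_real (\<psi> (\<theta>0 h)))"
      by (intro continuous_map_cmult continuous_map_cnj_comp continuous_map_of_real_comp cb c0)
    then show ?thesis
      by (rule continuous_map_eq) (use Wb_in in \<open>auto simp: aa_def \<theta>0_def \<theta>1_def\<close>)
  qed
  define K' where "K' = snd ` {z \<in> topspace Dtop. (\<lambda>(x, g). (x, actR x g)) z \<in> K \<times> L}"
  have K'c: "compactin G K'"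
  proof -
    have cK: "compactin (prod_topology X X) (K \<times> L)"
      using K(1) L_comp by (simp add: compactin_Times)
    have "compactin Dtop {z \<in> topspace Dtop. (\<lambda>(x, g). (x, actR x g)) z \<in> K \<times> L}"
      using proper cK unfolding proper_map_alt by blast
    moreover have "continuous_map Dtop G snd"
      by (rule continuous_map_from_subtopology[OF continuous_map_snd])
    ultimately show ?thesis unfolding K'_def by (rule image_compactin)
  qed
  have K'mem: "h \<in> K'" if "(x, h) \<in> D" "x \<in> K" "actR x h \<in> L" for x h
  proof -
    have "(x, h) \<in> {z \<in> topspace Dtop. (\<lambda>(x, g). (x, actR x g)) z \<in> K \<times> L}"
      using that unfolding topspace_Dtop by auto
    then show ?thesis unfolding K'_def by (rule image_eqI[rotated]) simp
  qed
  have K'W: "K' \<subseteq> Wb"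
  proof
    fix h assume "h \<in> K'"
    then obtain z where z: "z \<in> {z \<in> topspace Dtop. (\<lambda>(x, g). (x, actR x g)) z \<in> K \<times> L}" "h = snd z"
      unfolding K'_def by (rule imageE)
    obtain x where zx: "z = (x, h)" using z(2) by (cases z) simp
    have x: "(x, h) \<in> D" "x \<in> K" "actR x h \<in> L" using z(1) unfolding zx topspace_Dtop by auto
    have xX: "x \<in> topspace X" "h \<in> topspace G" "sX x = rG h" using x(1) unfolding D_def by auto
    have aU: "actR x h \<in> U" using x(3) LU by auto
    have sh: "sG h = sX (actR x h)" using sX_act[OF xX] by simp
    then have shP: "sG h \<in> P" unfolding P_def using aU by auto
    have "\<sigma> (sG h) = actR x h" using sh \<sigma>_sX[OF aU] by simp
    then have "\<theta>1 h = x" unfolding \<theta>1_def using act_inv[OF xX] by simp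
    then show "h \<in> Wb" unfolding Wb_def W1_def using xX shP x(2) K(2) by auto
  qed
  have zero1: "aa b h = 0" if "h \<in> Wb - K'" for h
  proof (rule ccontr)
    assume nz: "aa b h \<noteq> 0"
    have h: "h \<in> topspace G" "sG h \<in> P" using that Wb_in by auto
    have bnz: "b (\<theta>1 h) \<noteq> 0" and pnz: "\<psi> (\<theta>0 h) \<noteq> 0"
      using nz h unfolding aa_def \<theta>1_def \<theta>0_def by auto
    have "\<theta>1 h \<in> K" using bnz V(5) V(6) by blast
    moreover have "\<theta>0 h \<in> L" using pnz \<psi>_zero by blast
    moreover have "(\<theta>1 h, h) \<in> D" unfolding D_def \<theta>1_def using xh_facts[OF h] h by auto
    moreover have "actR (\<theta>1 h) h = \<theta>0 h" unfolding \<theta>1_def \<theta>0_def using xh_facts[OF h] by simp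
    ultimately have "h \<in> K'" using K'mem by metis
    then show False using that by blast
  qed
  have zero2: "aa b h = 0" if "h \<notin> Wb" for h
  proof (cases "h \<in> topspace G \<and> sG h \<in> P")
    case True
    then have "\<theta>1 h \<notin> V" using that unfolding Wb_def W1_def by auto
    then show ?thesis using V(6) unfolding aa_def \<theta>1_def by auto
  next
    case False
    then show ?thesis unfolding aa_def by auto
  qed
  show ?thesis unfolding Cc_extension_def
  proof (intro exI conjI)
    show "openin G Wb" by (rule Wbo)
    show "Hausdorff_space (subtopology G Wb)" by (rule Hs)
    show "continuous_map (subtopology G Wb) euclidean (aa b)" by (rule Cc)
    show "compactin (subtopology G Wb) K'" using K'c K'W compactin_subtopology by blast
    show "\<forall>y\<in>Wb - K'. aa b y = 0" using zero1 by blast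
    show "\<forall>y. y \<notin> Wb \<longrightarrow> aa b y = 0" using zero2 by blast
  qed
qed

lemma aa_frakS:
  assumes "\<xi> \<in> frakS X" shows "aa \<xi> \<in> frakS G"
proof -
  obtain n and c :: "nat \<Rightarrow> complex" and b where nb: "\<forall>k<n. Cc_extension X (b k)" "\<xi> = (\<lambda>y. \<Sum>k<n. c k * b k y)"
    using assms unfolding frakS_def by blast
  have "aa \<xi> = (\<lambda>h. \<Sum>k<n. cnj (c k) * aa (b k) h)"
  proof
    fix h show "aa \<xi> h = (\<Sum>k<n. cnj (c k) * aa (b k) h)"
    proof (cases "h \<in> topspace G \<and> sG h \<in> P")
      case True
      then show ?thesis unfolding aa_def nb(2) by (simp add: sum_distrib_right mult.assoc)
    next
      case False
      then have "aa \<xi> h = 0" "\<And>k. aa (b k) h = 0" unfolding aa_def by auto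
      then show ?thesis by simp
    qed
  qed
  moreover have "\<forall>k<n. Cc_extension G (aa (b k))" using nb(1) aa_Cc by blast
  ultimately show ?thesis unfolding frakS_def mem_Collect_eq
    by (intro exI[of _ n] exI[of _ "\<lambda>k. cnj (c k)"] exI[of _ "\<lambda>k. aa (b k)"]) simp
qed

end



context slice begin

lemma pt_identity:
  assumes g: "g \<in> topspace G" and h: "h \<in> topspace G" "rG h = rG g"
    and finA: "finite A" and A: "A = {x \<in> topspace X. sX x = rG g \<and> \<xi> x \<noteq> 0}"
  shows "aa \<xi> h * invol G iG (aa \<xi>) (mG (iG h) g)
      = (\<Sum>x\<in>A. cnj (\<xi> x) * \<xi> (actR x g) * complex_of_real ((\<psi> (actR x h))\<^sup>2))"
proof -
  define f where "f x = cnj (\<xi> x) * \<xi> (actR x g) * complex_of_real ((\<psi> (actR x h))\<^sup>2)" for x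
  have ih: "iG h \<in> topspace G" using iG_G h(1) .
  have kG: "mG (iG h) g \<in> topspace G" using mG_G[OF ih g] sG_i h by simp
  have ikG: "iG (mG (iG h) g) \<in> topspace G" using iG_G kG .
  have sik: "sG (iG (mG (iG h) g)) = sG h"
    using sG_i[OF kG] rG_m[OF ih g] sG_i h rG_i by simp
  have iik: "iG (iG (mG (iG h) g)) = mG (iG h) g" using ii kG by simp
  have fzero: "f x = 0" if "x \<in> A" "\<psi> (actR x h) = 0" for x
    unfolding f_def using that by simp
  show ?thesis
  proof (cases "sG h \<in> P")
    case False
    have "aa \<xi> h = 0" unfolding aa_def using False by simp
    moreover have "(\<Sum>x\<in>A. f x) = 0"
    proof (rule sum.neutral, rule ballI)
      fix x assume x: "x \<in> A"
      have xX: "x \<in> topspace X" "sX x = rG h" using x A h by auto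
      show "f x = 0"
      proof (rule fzero[OF x], rule ccontr)
        assume "\<psi> (actR x h) \<noteq> 0"
        then have "actR x h \<in> U" using \<psi>_zero LU by blast
        moreover have "sX (actR x h) = sG h" using sX_act[OF xX(1) h(1) xX(2)] .
        ultimately show False using False unfolding P_def by (metis image_eqI)
      qed
    qed
    ultimately show ?thesis unfolding f_def by simp
  next
    case True
    note hP = True
    define y where "y = \<sigma> (sG h)"
    define xh where "xh = actR y (iG h)"
    have xh: "xh \<in> topspace X" "sX xh = rG h" "actR xh h = y" "y \<in> topspace X"
      using xh_facts[OF h(1) hP] unfolding xh_def y_def by auto
    have ysX: "sX y = rG (iG h)" using xh_facts(2)[OF h(1) hP] unfolding y_def .
    have lhs1: "aa \<xi> h = cnj (\<xi> xh) * complex_of_real (\<psi> y)"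
      unfolding aa_def xh_def y_def using h(1) hP by simp
    have "aa \<xi> (iG (mG (iG h) g)) = cnj (\<xi> (actR y (mG (iG h) g))) * complex_of_real (\<psi> y)"
      unfolding aa_def y_def using ikG sik iik hP by simp
    also have "actR y (mG (iG h) g) = actR xh g"
      unfolding xh_def using act_assoc[OF xh(4) ih g ysX] sG_i h by simp
    finally have lhs2: "invol G iG (aa \<xi>) (mG (iG h) g) = \<xi> (actR xh g) * complex_of_real (\<psi> y)"
      unfolding invol_def using kG by simp
    have lhs: "aa \<xi> h * invol G iG (aa \<xi>) (mG (iG h) g) = f xh"
      unfolding lhs1 lhs2 f_def xh(3) by (simp add: power2_eq_square algebra_simps)
    have others: "f x = 0" if "x \<in> A" "x \<noteq> xh" for x
    proof (rule fzero[OF that(1)], rule ccontr)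
      assume nz: "\<psi> (actR x h) \<noteq> 0"
      have xX: "x \<in> topspace X" "sX x = rG h" using that A h by auto
      have aU: "actR x h \<in> U" using nz \<psi>_zero LU by blast
      have "sX (actR x h) = sG h" using sX_act[OF xX(1) h(1) xX(2)] .
      then have "actR x h = y" unfolding y_def using \<sigma>_sX[OF aU] by simp
      then have "x = xh" unfolding xh_def using act_inv[OF xX(1) h(1) xX(2)] by simp
      then show False using that(2) by simp
    qed
    show ?thesis
    proof (cases "xh \<in> A")
      case True
      have "(\<Sum>x\<in>A. f x) = f xh + (\<Sum>x\<in>A - {xh}. f x)" using sum.remove[OF finA True] .
      also have "(\<Sum>x\<in>A - {xh}. f x) = 0" using others by (intro sum.neutral) auto
      finally show ?thesis using lhs unfolding f_def by simp
    next
      case False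
      have "\<xi> xh = 0" using False xh A h by auto
      then have "f xh = 0" unfolding f_def by simp
      moreover have "(\<Sum>x\<in>A. f x) = 0" using others False by (intro sum.neutral) auto
      ultimately show ?thesis using lhs unfolding f_def by simp
    qed
  qed
qed

lemma conv_aa:
  assumes g: "g \<in> topspace G" and finA: "finite A" and A: "A = {x \<in> topspace X. sX x = rG g \<and> \<xi> x \<noteq> 0}"
  shows "conv G rG mG iG (aa \<xi>) (invol G iG (aa \<xi>)) g
      = (\<Sum>x\<in>A. cnj (\<xi> x) * \<xi> (actR x g) * complex_of_real (\<Psi> x))"
proof -
  define Hg where "Hg = {h \<in> topspace G. rG h = rG g}"
  define SS where "SS = (\<Union>x\<in>A. Sfin x)"
  have AX: "x \<in> topspace X" "sX x = rG g" if "x \<in> A" for x using that A by auto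
  have finSS: "finite SS" unfolding SS_def using finA Sfin_finite AX by blast
  have SSH: "SS \<subseteq> Hg" unfolding SS_def Hg_def Sfin_def using AX by auto
  define F where "F h x = cnj (\<xi> x) * \<xi> (actR x g) * complex_of_real ((\<psi> (actR x h))\<^sup>2)" for h x
  have pt: "aa \<xi> h * invol G iG (aa \<xi>) (mG (iG h) g) = (\<Sum>x\<in>A. F h x)" if "h \<in> Hg" for h
    using pt_identity[OF g _ _ finA A] that unfolding Hg_def F_def by auto
  have "conv G rG mG iG (aa \<xi>) (invol G iG (aa \<xi>)) g = infsum (\<lambda>h. (\<Sum>x\<in>A. F h x)) Hg"
    unfolding conv_def Hg_def[symmetric] using g pt by (simp cong: infsum_cong)
  also have "\<dots> = (\<Sum>h\<in>SS. \<Sum>x\<in>A. F h x)"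
  proof (rule infsum_fin[OF finSS SSH])
    fix h assume h: "h \<in> Hg - SS"
    show "(\<Sum>x\<in>A. F h x) = 0"
    proof (rule sum.neutral, rule ballI)
      fix x assume x: "x \<in> A"
      show "F h x = 0"
      proof (cases "actR x h \<in> L")
        case True
        then have "h \<in> Sfin x" using h AX[OF x] unfolding Hg_def Sfin_def by auto
        then show ?thesis using h x unfolding SS_def by auto
      next
        case False
        then show ?thesis unfolding F_def using \<psi>_zero by simp
      qed
    qed
  qed
  also have "\<dots> = (\<Sum>x\<in>A. \<Sum>h\<in>SS. F h x)" by (rule sum.swap)
  also have "\<dots> = (\<Sum>x\<in>A. cnj (\<xi> x) * \<xi> (actR x g) * complex_of_real (\<Psi> x))"
  proof (rule sum.cong[OF refl])
    fix x assume x: "x \<in> A"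
    have "(\<Sum>h\<in>SS. (\<psi> (actR x h))\<^sup>2) = (\<Sum>h\<in>Sfin x. (\<psi> (actR x h))\<^sup>2)"
    proof (rule sum.mono_neutral_right[OF finSS])
      show "Sfin x \<subseteq> SS" unfolding SS_def using x by auto
      show "\<forall>i\<in>SS - Sfin x. (\<psi> (actR x i))\<^sup>2 = 0"
      proof
        fix i assume i: "i \<in> SS - Sfin x"
        then have "i \<in> topspace G" "rG i = sX x" using SSH AX[OF x] unfolding Hg_def by auto
        then have "actR x i \<notin> L" using i unfolding Sfin_def by auto
        then show "(\<psi> (actR x i))\<^sup>2 = 0" using \<psi>_zero by simp
      qed
    qed
    then have "\<Psi> x = (\<Sum>h\<in>SS. (\<psi> (actR x h))\<^sup>2)" using \<Psi>_sum AX[OF x] by simp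
    then show "(\<Sum>h\<in>SS. F h x) = cnj (\<xi> x) * \<xi> (actR x g) * complex_of_real (\<Psi> x)"
      unfolding F_def by (simp add: sum_distrib_left of_real_sum)
  qed
  finally show ?thesis .
qed

end



lemma Cc_zero_out: assumes "Cc_extension Y f" "y \<notin> topspace Y" shows "f y = 0"
proof -
  obtain V where V: "openin Y V" "\<forall>y. y \<notin> V \<longrightarrow> f y = 0"
    using assms(1) unfolding Cc_extension_def by blast
  have "y \<notin> V" using openin_subset[OF V(1)] assms(2) by auto
  then show ?thesis using V(2) by simp
qed

lemma frakS_zero_out: assumes "f \<in> frakS Y" "y \<notin> topspace Y" shows "f y = 0"
proof -
  obtain n and c :: "nat \<Rightarrow> complex" and b where nb: "\<forall>k<n. Cc_extension Y (b k)" "f = (\<lambda>y. \<Sum>k<n. c k * b k y)"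
    using assms(1) unfolding frakS_def by blast
  have "b k y = 0" if "k < n" for k using Cc_zero_out[OF _ assms(2)] nb(1) that by simp
  then show ?thesis unfolding nb(2) by simp
qed

context gcorr begin

abbreviation "SL U L \<psi> \<equiv> slice H H0 rH sH mH iH X rX actL sX actR G G0 rG sG mG iG U L \<psi>"

lemma mk_slice:
  assumes "openin X U"
    "homeomorphic_map (subtopology X U) (subtopology (subtopology G G0) (sX ` U)) sX"
    "openin (subtopology G G0) (sX ` U)" "compactin X L" "L \<subseteq> U"
    "continuous_map (subtopology X U) euclideanreal \<psi>" "\<And>y. y \<notin> L \<Longrightarrow> \<psi> y = 0"
  shows "SL U L \<psi>"
  unfolding slice_def slice_axioms_def using gcorr_axioms assms by simp

lemma exist_bump:
  assumes x: "x \<in> topspace X"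
  shows "\<exists>U L \<psi> N. SL U L \<psi> \<and> openin X N \<and> x \<in> N \<and> (\<forall>y\<in>N. \<psi> y = 1) \<and> (\<forall>y. 0 \<le> \<psi> y)"
proof -
  obtain U where U: "openin X U" "x \<in> U" "openin (subtopology G G0) (sX ` U)"
    "homeomorphic_map (subtopology X U) (subtopology (subtopology G G0) (sX ` U)) sX"
  proof -
    have "\<forall>x\<in>topspace X. \<exists>U. openin X U \<and> x \<in> U \<and> openin (subtopology G G0) (sX ` U) \<and>
        homeomorphic_map (subtopology X U) (subtopology (subtopology G G0) (sX ` U)) sX"
      using etX unfolding local_homeomorphism_def by simp
    then show ?thesis using that x by blast
  qed
  have hs: "(subtopology X U) homeomorphic_space (subtopology (subtopology G G0) (sX ` U))"
    using homeomorphic_map_imp_homeomorphic_space[OF U(4)] .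
  have HY: "Hausdorff_space (subtopology X U)"
  proof -
    have "Hausdorff_space (subtopology (subtopology G G0) (sX ` U))"
      by (rule Hausdorff_space_subtopology[OF G0_Hausdorff])
    then show ?thesis using homeomorphic_Hausdorff_space[OF hs] by simp
  qed
  have "locally_compact_space (subtopology (subtopology G G0) (sX ` U))"
    by (rule locally_compact_space_open_subset[OF disjI1[OF G0_Hausdorff] G0_lc U(3)])
  then have LY: "locally_compact_space (subtopology X U)"
    using homeomorphic_locally_compact_space[OF hs] by simp
  have xY: "x \<in> topspace (subtopology X U)" using x U(2) by simp
  obtain \<psi> N L where b: "openin (subtopology X U) N" "x \<in> N" "compactin (subtopology X U) L" "N \<subseteq> L"
    "continuous_map (subtopology X U) euclideanreal \<psi>" "\<And>y. y \<in> N \<Longrightarrow> \<psi> y = 1"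
    "\<And>y. y \<in> topspace (subtopology X U) - L \<Longrightarrow> \<psi> y = 0" "\<And>y. 0 \<le> \<psi> y" "\<And>y. \<psi> y \<le> 1"
    apply (rule bump[OF HY LY xY]) apply (rule that) apply assumption+ done
  define \<psi>' where "\<psi>' y = (if y \<in> L then \<psi> y else 0)" for y
  have L: "compactin X L" "L \<subseteq> U" using b(3) unfolding compactin_subtopology by auto
  have c: "continuous_map (subtopology X U) euclideanreal \<psi>'"
  proof (rule continuous_map_eq[OF b(5)])
    fix y assume "y \<in> topspace (subtopology X U)"
    then show "\<psi> y = \<psi>' y" unfolding \<psi>'_def using b(7) by auto
  qed
  have "SL U L \<psi>'"
    by (rule mk_slice[OF U(1) U(4) U(3) L c]) (simp add: \<psi>'_def)
  moreover have "openin X N" using openin_trans_full[OF b(1) U(1)] .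
  moreover have "\<forall>y\<in>N. \<psi>' y = 1" using b(4,6) unfolding \<psi>'_def by auto
  moreover have "\<forall>y. 0 \<le> \<psi>' y" using b(8) unfolding \<psi>'_def by auto
  ultimately show ?thesis using b(2) by (intro exI[of _ U] exI[of _ L] exI[of _ \<psi>'] exI[of _ N]) simp
qed


lemma main:
  assumes xi: "\<xi> \<in> frakS X"
  shows "\<exists>(n::nat) a. (\<forall>k<n. a k \<in> frakS G) \<and>
            corr_inner X sX actR G rG \<xi> \<xi> =
              (\<lambda>g. \<Sum>k<n. conv G rG mG iG (a k) (invol G iG (a k)) g)"
proof -
  obtain C where C: "compactin X C" "\<And>y. y \<notin> C \<Longrightarrow> \<xi> y = 0" using frakS_support[OF xi] by blast
  have CX: "C \<subseteq> topspace X" using C(1) compactin_subset_topspace by blast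
  have ex: "\<forall>x\<in>topspace X. \<exists>t. case t of (U, L, \<psi>, N) \<Rightarrow> SL U L \<psi> \<and> openin X N \<and> x \<in> N \<and> (\<forall>y\<in>N. \<psi> y = 1) \<and> (\<forall>y. 0 \<le> \<psi> y)"
  proof
    fix x assume "x \<in> topspace X"
    then obtain U L \<psi> N where "SL U L \<psi> \<and> openin X N \<and> x \<in> N \<and> (\<forall>y\<in>N. \<psi> y = 1) \<and> (\<forall>y. 0 \<le> \<psi> y)"
      using exist_bump by blast
    then show "\<exists>t. case t of (U, L, \<psi>, N) \<Rightarrow> SL U L \<psi> \<and> openin X N \<and> x \<in> N \<and> (\<forall>y\<in>N. \<psi> y = 1) \<and> (\<forall>y. 0 \<le> \<psi> y)"
      by (intro exI[of _ "(U, L, \<psi>, N)"]) simp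
  qed
  obtain T where T: "\<forall>x\<in>topspace X. case T x of (U, L, \<psi>, N) \<Rightarrow> SL U L \<psi> \<and> openin X N \<and> x \<in> N \<and> (\<forall>y\<in>N. \<psi> y = 1) \<and> (\<forall>y. 0 \<le> \<psi> y)"
    using bchoice[OF ex] by blast
  define UU where "UU x = fst (T x)" for x
  define LL where "LL x = fst (snd (T x))" for x
  define PP where "PP x = fst (snd (snd (T x)))" for x
  define NN where "NN x = snd (snd (snd (T x)))" for x
  have TT: "SL (UU x) (LL x) (PP x) \<and> openin X (NN x) \<and> x \<in> NN x \<and> (\<forall>y\<in>NN x. PP x y = 1) \<and> (\<forall>y. 0 \<le> PP x y)"
    if "x \<in> topspace X" for x
  proof -
    obtain U L \<psi> N where e: "T x = (U, L, \<psi>, N)" by (cases "T x") auto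
    have "case T x of (U, L, \<psi>, N) \<Rightarrow> SL U L \<psi> \<and> openin X N \<and> x \<in> N \<and> (\<forall>y\<in>N. \<psi> y = 1) \<and> (\<forall>y. 0 \<le> \<psi> y)"
      by (rule bspec[OF T that])
    then show ?thesis unfolding UU_def LL_def PP_def NN_def e by simp
  qed
  have cov: "\<forall>V\<in>NN ` C. openin X V" "C \<subseteq> \<Union> (NN ` C)" using TT CX by auto
  obtain FF where FF: "finite FF" "FF \<subseteq> NN ` C" "C \<subseteq> \<Union> FF"
  proof -
    have "\<forall>\<U>. (\<forall>V\<in>\<U>. openin X V) \<and> C \<subseteq> \<Union>\<U> \<longrightarrow> (\<exists>\<F>. finite \<F> \<and> \<F> \<subseteq> \<U> \<and> C \<subseteq> \<Union>\<F>)"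
      using C(1) unfolding compactin_def by simp
    then have "\<exists>\<F>. finite \<F> \<and> \<F> \<subseteq> NN ` C \<and> C \<subseteq> \<Union>\<F>" using cov by simp
    then show ?thesis using that by auto
  qed
  obtain F0 where F0: "F0 \<subseteq> C" "finite F0" "FF = NN ` F0"
    using finite_subset_image[OF FF(1) FF(2)] by blast
  have F0X: "F0 \<subseteq> topspace X" using F0(1) CX by auto
  have covF: "C \<subseteq> (\<Union>x\<in>F0. NN x)" using FF(3) F0(3) by auto
  have sl: "SL (UU x) (LL x) (PP x)" if "x \<in> F0" for x using TT F0X that by blast
  define \<Psi>i where "\<Psi>i x = slice.\<Psi> sX actR G rG (PP x)" for x
  define Fs where "Fs y = (\<Sum>x\<in>F0. \<Psi>i x y)" for y
  have Fs_cont: "continuous_map X euclideanreal Fs"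
    unfolding Fs_def \<Psi>i_def by (rule continuous_map_sum[OF F0(2)]) (use slice.\<Psi>_cont[OF sl] in auto)
  have Fs_inv: "Fs (actR y g) = Fs y" if "y \<in> topspace X" "g \<in> topspace G" "sX y = rG g" for y g
    unfolding Fs_def \<Psi>i_def
  proof (rule sum.cong[OF refl])
    fix x assume x: "x \<in> F0"
    show "slice.\<Psi> sX actR G rG (PP x) (actR y g) = slice.\<Psi> sX actR G rG (PP x) y"
      by (rule slice.\<Psi>_inv[OF sl[OF x] that])
  qed
  have Fs_ge: "1 \<le> Fs y" if yC: "y \<in> C" for y
  proof -
    obtain x where x: "x \<in> F0" "y \<in> NN x" using covF yC by auto
    have yX: "y \<in> topspace X" using yC CX by auto
    have "1 = (PP x y)\<^sup>2" using TT[of x] F0X x by auto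
    also have "\<dots> \<le> \<Psi>i x y" unfolding \<Psi>i_def by (rule slice.\<Psi>_ge[OF sl[OF x(1)] yX])
    also have "\<dots> \<le> Fs y" unfolding Fs_def
      by (rule member_le_sum[OF x(1) _ F0(2)]) (use slice.\<Psi>_nonneg[OF sl yX] \<Psi>i_def in auto)
    finally show ?thesis .
  qed
  define \<rho> where "\<rho> x y = PP x y / sqrt (max (Fs y) 1)" for x y
  have den_pos: "0 < sqrt (max (Fs y) 1)" for y by simp
  have den_c: "continuous_map X euclideanreal (\<lambda>y. sqrt (max (Fs y) 1))"
  proof -
    have "continuous_map euclideanreal euclideanreal (\<lambda>t::real. sqrt (max t 1))"
      by (simp add: continuous_intros)
    then show ?thesis using continuous_map_compose[OF Fs_cont] unfolding o_def by blast
  qed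
  have sl\<rho>: "SL (UU x) (LL x) (\<rho> x)" if x: "x \<in> F0" for x
  proof (rule mk_slice)
    interpret s: slice H H0 rH sH mH iH X rX actL sX actR G G0 rG sG mG iG "UU x" "LL x" "PP x"
      using sl[OF x] .
    show "openin X (UU x)" by (rule s.U_open)
    show "homeomorphic_map (subtopology X (UU x)) (subtopology (subtopology G G0) (sX ` UU x)) sX" by (rule s.U_hom)
    show "openin (subtopology G G0) (sX ` UU x)" by (rule s.P_open)
    show "compactin X (LL x)" by (rule s.L_comp)
    show "LL x \<subseteq> UU x" by (rule s.LU)
    show "\<rho> x y = 0" if "y \<notin> LL x" for y unfolding \<rho>_def using s.\<psi>_zero[OF that] by simp
    show "continuous_map (subtopology X (UU x)) euclideanreal (\<rho> x)"
      unfolding \<rho>_def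
      by (rule continuous_map_real_divide[OF s.\<psi>_cont continuous_map_from_subtopology[OF den_c]])
         (metis den_pos less_irrefl)
  qed
  have \<Psi>\<rho>: "slice.\<Psi> sX actR G rG (\<rho> x) y = \<Psi>i x y / max (Fs y) 1" if x: "x \<in> F0" and yX: "y \<in> topspace X" for x y
  proof -
    have "slice.\<Psi> sX actR G rG (\<rho> x) y = (\<Sum>k\<in>slice.Sfin sX actR G rG (LL x) y. (\<rho> x (actR y k))\<^sup>2)"
      by (rule slice.\<Psi>_sum[OF sl\<rho>[OF x] yX])
    also have "\<dots> = (\<Sum>k\<in>slice.Sfin sX actR G rG (LL x) y. (PP x (actR y k))\<^sup>2 / max (Fs y) 1)"
    proof (rule sum.cong[OF refl])
      fix k assume k: "k \<in> slice.Sfin sX actR G rG (LL x) y"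
      then have k1: "k \<in> topspace G" "sX y = rG k" unfolding slice.Sfin_def[OF sl[OF x]] by auto
      have "Fs (actR y k) = Fs y" using Fs_inv[OF yX k1] .
      then show "(\<rho> x (actR y k))\<^sup>2 = (PP x (actR y k))\<^sup>2 / max (Fs y) 1"
        unfolding \<rho>_def by (simp add: power_divide)
    qed
    also have "\<dots> = (\<Sum>k\<in>slice.Sfin sX actR G rG (LL x) y. (PP x (actR y k))\<^sup>2) / max (Fs y) 1"
      by (simp add: sum_divide_distrib)
    also have "(\<Sum>k\<in>slice.Sfin sX actR G rG (LL x) y. (PP x (actR y k))\<^sup>2) = \<Psi>i x y"
      unfolding \<Psi>i_def by (rule slice.\<Psi>_sum[OF sl[OF x] yX, symmetric])
    finally show ?thesis .
  qed
  define a where "a x = slice.aa sX actR G sG iG (UU x) (\<rho> x) \<xi>" for x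
  have aS: "a x \<in> frakS G" if "x \<in> F0" for x
    unfolding a_def by (rule slice.aa_frakS[OF sl\<rho>[OF that] xi])
  have ident: "corr_inner X sX actR G rG \<xi> \<xi> g = (\<Sum>x\<in>F0. conv G rG mG iG (a x) (invol G iG (a x)) g)" for g
  proof (cases "g \<in> topspace G")
    case False
    then show ?thesis unfolding corr_inner_def conv_def by simp
  next
    case True
    note g = True
    define A where "A = {y \<in> topspace X. sX y = rG g \<and> \<xi> y \<noteq> 0}"
    have finA: "finite A" unfolding A_def by (rule frakS_fin[OF G0_Hausdorff etX xi])
    have AX: "y \<in> topspace X" "\<xi> y \<noteq> 0" "y \<in> C" if "y \<in> A" for y using that C(2) unfolding A_def by auto
    have lhs: "corr_inner X sX actR G rG \<xi> \<xi> g = (\<Sum>y\<in>A. cnj (\<xi> y) * \<xi> (actR y g))"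
      unfolding corr_inner_def using g
      by (simp, intro infsum_fin[OF finA]) (auto simp: A_def)
    have "(\<Sum>x\<in>F0. conv G rG mG iG (a x) (invol G iG (a x)) g)
        = (\<Sum>x\<in>F0. \<Sum>y\<in>A. cnj (\<xi> y) * \<xi> (actR y g) * complex_of_real (slice.\<Psi> sX actR G rG (\<rho> x) y))"
      unfolding a_def by (rule sum.cong[OF refl]) (rule slice.conv_aa[OF sl\<rho> g finA A_def])
    also have "\<dots> = (\<Sum>y\<in>A. \<Sum>x\<in>F0. cnj (\<xi> y) * \<xi> (actR y g) * complex_of_real (slice.\<Psi> sX actR G rG (\<rho> x) y))"
      by (rule sum.swap)
    also have "\<dots> = (\<Sum>y\<in>A. cnj (\<xi> y) * \<xi> (actR y g))"
    proof (rule sum.cong[OF refl])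
      fix y assume y: "y \<in> A"
      have "(\<Sum>x\<in>F0. slice.\<Psi> sX actR G rG (\<rho> x) y) = (\<Sum>x\<in>F0. \<Psi>i x y / max (Fs y) 1)"
        using \<Psi>\<rho> AX(1)[OF y] by simp
      also have "\<dots> = Fs y / max (Fs y) 1" unfolding Fs_def by (simp add: sum_divide_distrib)
      also have "\<dots> = 1" using Fs_ge[OF AX(3)[OF y]] by simp
      finally have one: "(\<Sum>x\<in>F0. slice.\<Psi> sX actR G rG (\<rho> x) y) = 1" .
      have "(\<Sum>x\<in>F0. cnj (\<xi> y) * \<xi> (actR y g) * complex_of_real (slice.\<Psi> sX actR G rG (\<rho> x) y))
          = cnj (\<xi> y) * \<xi> (actR y g) * complex_of_real (\<Sum>x\<in>F0. slice.\<Psi> sX actR G rG (\<rho> x) y)"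
        by (simp add: sum_distrib_left of_real_sum)
      then show "(\<Sum>x\<in>F0. cnj (\<xi> y) * \<xi> (actR y g) * complex_of_real (slice.\<Psi> sX actR G rG (\<rho> x) y))
          = cnj (\<xi> y) * \<xi> (actR y g)" using one by simp
    qed
    finally show ?thesis using lhs by simp
  qed
  obtain e where e: "bij_betw e {0..<card F0} F0" using ex_bij_betw_nat_finite[OF F0(2)] by blast
  have e': "bij_betw e {..<card F0} F0" using e by (simp add: atLeast0LessThan)
  show ?thesis
  proof (intro exI conjI)
    show "\<forall>k<card F0. (a \<circ> e) k \<in> frakS G"
      using aS e' unfolding bij_betw_def by auto
    show "corr_inner X sX actR G rG \<xi> \<xi> = (\<lambda>g. \<Sum>k<card F0. conv G rG mG iG ((a \<circ> e) k) (invol G iG ((a \<circ> e) k)) g)"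
    proof
      fix g
      have "(\<Sum>k<card F0. conv G rG mG iG ((a \<circ> e) k) (invol G iG ((a \<circ> e) k)) g)
          = (\<Sum>x\<in>F0. conv G rG mG iG (a x) (invol G iG (a x)) g)"
        using sum.reindex_bij_betw[OF e', of "\<lambda>x. conv G rG mG iG (a x) (invol G iG (a x)) g"] by simp
      then show "corr_inner X sX actR G rG \<xi> \<xi> g = (\<Sum>k<card F0. conv G rG mG iG ((a \<circ> e) k) (invol G iG ((a \<circ> e) k)) g)"
        using ident by simp
    qed
  qed
qed


lemma nonzero:
  assumes xi: "\<xi> \<in> frakS X" and nz: "\<xi> \<noteq> (\<lambda>_. 0)"
  shows "corr_inner X sX actR G rG \<xi> \<xi> \<noteq> (\<lambda>_. 0)"
proof
  assume Z: "corr_inner X sX actR G rG \<xi> \<xi> = (\<lambda>_. 0)"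
  obtain x0 where x0: "\<xi> x0 \<noteq> 0" using nz by auto
  have x0X: "x0 \<in> topspace X" using x0 frakS_zero_out[OF xi] by blast
  define g where "g = sX x0"
  have gG0: "g \<in> G0" unfolding g_def using sX_G0[OF x0X] .
  have gG: "g \<in> topspace G" using gG0 G0sub by auto
  have rg: "rG g = g" using rG_unit[OF gG0] .
  define A where "A = {y \<in> topspace X. sX y = rG g \<and> \<xi> y \<noteq> 0}"
  have finA: "finite A" unfolding A_def by (rule frakS_fin[OF G0_Hausdorff etX xi])
  have x0A: "x0 \<in> A" unfolding A_def using x0X x0 rg g_def by simp
  have "corr_inner X sX actR G rG \<xi> \<xi> g = (\<Sum>y\<in>A. cnj (\<xi> y) * \<xi> (actR y g))"
    unfolding corr_inner_def using gG
    by (simp, intro infsum_fin[OF finA]) (auto simp: A_def)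
  also have "\<dots> = (\<Sum>y\<in>A. complex_of_real ((norm (\<xi> y))\<^sup>2))"
  proof (rule sum.cong[OF refl])
    fix y assume y: "y \<in> A"
    then have "y \<in> topspace X" "sX y = g" unfolding A_def using rg by auto
    then have "actR y g = y" using act_unit by metis
    then show "cnj (\<xi> y) * \<xi> (actR y g) = complex_of_real ((norm (\<xi> y))\<^sup>2)"
      using complex_norm_square[of "\<xi> y"] by (simp add: mult.commute)
  qed
  also have "\<dots> = complex_of_real (\<Sum>y\<in>A. (norm (\<xi> y))\<^sup>2)" by (simp add: of_real_sum)
  finally have e: "corr_inner X sX actR G rG \<xi> \<xi> g = complex_of_real (\<Sum>y\<in>A. (norm (\<xi> y))\<^sup>2)" .
  have pos: "0 < (\<Sum>y\<in>A. (norm (\<xi> y))\<^sup>2)"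
    by (rule sum_pos2[OF finA x0A]) (use x0 in auto)
  have "complex_of_real (\<Sum>y\<in>A. (norm (\<xi> y))\<^sup>2) \<noteq> 0"
  proof
    assume "complex_of_real (\<Sum>y\<in>A. (norm (\<xi> y))\<^sup>2) = 0"
    then have "(\<Sum>y\<in>A. (norm (\<xi> y))\<^sup>2) = 0" by (simp only: of_real_eq_0_iff)
    then show False using pos by simp
  qed
  then have "corr_inner X sX actR G rG \<xi> \<xi> g \<noteq> 0" unfolding e .
  then show False using Z by simp
qed

end

theorem lemma7p6:
  fixes H :: "'h topology" and X :: "'x topology" and G :: "'g topology"
  assumes corr: "groupoid_correspondence H H0 rH sH mH iH X rX actL sX actR G G0 rG sG mG iG"
    and xi: "\<xi> \<in> frakS X"
  shows "(\<exists>(n::nat) a. (\<forall>k<n. a k \<in> frakS G) \<and>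
            corr_inner X sX actR G rG \<xi> \<xi> =
              (\<lambda>g. \<Sum>k<n. conv G rG mG iG (a k) (invol G iG (a k)) g))
         \<and> (\<xi> \<noteq> (\<lambda>_. 0) \<longrightarrow> corr_inner X sX actR G rG \<xi> \<xi> \<noteq> (\<lambda>_. 0))"
proof -
  interpret gc: gcorr H H0 rH sH mH iH X rX actL sX actR G G0 rG sG mG iG
    using corr by (rule gcorr.intro)
  show ?thesis using gc.main[OF xi] gc.nonzero[OF xi] by blast
qed


end
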